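(* Let $\mathcal H,\mathcal K$ be finite-dimensional Hilbert spaces, $\mathcal A\subseteq\mathcal L(\mathcal H)$ and $\mathcal B\subseteq\mathcal L(\mathcal K)$ Von Neumann algebras, and $U:\mathcal H\to\mathcal K$ a unitary. Then $U$ is Heisenberg semi-causal from $\mathcal A$ to $\mathcal B$, i.e. $[U^\dagger BU,A]=0$ for all $B\in\mathcal B$ and $A\in\mathcal A$, if and only if the unitary channel $\rho\mapsto U\rho U^\dagger$ is Schrödinger semi-causal from $\mathcal A$ to $\mathcal B$.
   Context: A Von Neumann algebra on $\mathcal H$ is a $*$-subalgebra of $\mathcal L(\mathcal H)$ closed under adjoint and containing $\mathbb 1$; $\mathcal C'$ denotes its commutant. Partial trace over a Von Neumann algebra $\mathcal C\subseteq\mathcal L(\mathcal H)$: take a unitary $V:\mathcal H\to\bigoplus_i(\mathcal H_L^i\otimes\mathcal H_R^i)$ with $V\mathcal C'V^\dagger=\bigoplus_i\mathcal L(\mathcal H_L^i)\otimes\mathbb 1_{\mathcal H_R^i}$ (so $V\mathcal CV^\dagger=\bigoplus_i\mathbb 1\otimes\mathcal L(\mathcal H_R^i)$); identifying $\mathcal H$ with $\bigoplus_i(\mathcal H_L^i\otimes\mathcal H_R^i)$, $\mathrm{Tr}_{\mathcal C}(X)=\bigoplus_i\mathrm{Tr}_{\mathcal H_R^i}(\pi_iX\pi_i)\in\bigoplus_i\mathcal L(\mathcal H_L^i)$, with $\pi_i$ the projector onto $\mathcal H_L^i\otimes\mathcal H_R^i$. A channel $\mathcal E:\mathcal L(\mathcal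 H)\to\mathcal L(\mathcal K)$ is Schrödinger semi-causal from $\mathcal A$ to $\mathcal B$ if there exists a completely positive trace-preserving map $\mathcal E'$ (from the codomain of $\mathrm{Tr}_{\mathcal A}$ to that of $\mathrm{Tr}_{\mathcal B'}$) such that $\mathrm{Tr}_{\mathcal B'}[\mathcal E(\rho)]=\mathcal E'(\mathrm{Tr}_{\mathcal A}[\rho])$ for all $\rho\in\mathcal L(\mathcal H)$. *)

theory Defs
  imports "Jordan_Normal_Form.Schur_Decomposition"
begin

text \<open>Finite-dimensional Hilbert spaces are modelled as complex n-space; operators
  H -> K as complex matrices in carrier_mat (dim K) (dim H); the adjoint is
  mat_adjoint from Jordan_Normal_Form.\<close>

definition mtrace :: "complex mat \<Rightarrow> complex" where
  "mtrace M = (\<Sum>i<dim_row M. M $$ (i, i))"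

definition unitary_mat :: "nat \<Rightarrow> nat \<Rightarrow> complex mat \<Rightarrow> bool" where
  "unitary_mat m n U \<longleftrightarrow> U \<in> carrier_mat m n \<and>
     mat_adjoint U * U = 1\<^sub>m n \<and> U * mat_adjoint U = 1\<^sub>m m"

definition vN_algebra :: "nat \<Rightarrow> complex mat set \<Rightarrow> bool" where
  "vN_algebra n C \<longleftrightarrow> C \<subseteq> carrier_mat n n \<and> 1\<^sub>m n \<in> C \<and>
     (\<forall>X\<in>C. \<forall>Y\<in>C. X + Y \<in> C \<and> X * Y \<in> C) \<and>
     (\<forall>c. \<forall>X\<in>C. c \<cdot>\<^sub>m X \<in> C) \<and>
     (\<forall>X\<in>C. mat_adjoint X \<in> C)"

definition commutant :: "nat \<Rightarrow> complex mat set \<Rightarrow> complex mat set" where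
  "commutant n C = {X \<in> carrier_mat n n. \<forall>Y\<in>C. X * Y = Y * X}"

text \<open>Kronecker (tensor) product; index (a,b) of C^p (x) C^r corresponds to a*r+b.\<close>
definition kron :: "complex mat \<Rightarrow> complex mat \<Rightarrow> complex mat" where
  "kron A B = mat (dim_row A * dim_row B) (dim_col A * dim_col B)
     (\<lambda>(i, j). A $$ (i div dim_row B, j div dim_col B) * B $$ (i mod dim_row B, j mod dim_col B))"

definition ptrace_R :: "nat \<Rightarrow> nat \<Rightarrow> complex mat \<Rightarrow> complex mat" where
  "ptrace_R dL dR M = mat dL dL (\<lambda>(a, a'). \<Sum>b<dR. M $$ (a * dR + b, a' * dR + b))"

text \<open>Diagonal block of size d starting at offset off (i.e. pi_i X pi_i restricted to its range).\<close>
definition diag_block :: "nat \<Rightarrow> nat \<Rightarrow> complex mat \<Rightarrow> complex mat" where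
  "diag_block off d X = mat d d (\<lambda>(a, b). X $$ (off + a, off + b))"

text \<open>Decomposition data: ds lists the pairs (dim H_L^i, dim H_R^i); V : C^n -> (+)_i H_L^i (x) H_R^i
  unitary with V C' V^dagger = (+)_i L(H_L^i) (x) 1.\<close>
definition vN_decomposition :: "nat \<Rightarrow> complex mat set \<Rightarrow> complex mat \<Rightarrow> (nat \<times> nat) list \<Rightarrow> bool" where
  "vN_decomposition n C V ds \<longleftrightarrow>
     unitary_mat n n V \<and> (\<forall>(dL, dR) \<in> set ds. 0 < dL \<and> 0 < dR) \<and>
     sum_list (map (\<lambda>(dL, dR). dL * dR) ds) = n \<and>
     (\<lambda>X. V * X * mat_adjoint V) ` commutant n C =
       {diag_block_mat (map (\<lambda>i. kron (Ls ! i) (1\<^sub>m (snd (ds ! i)))) [0..<length ds]) | Ls.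
          length Ls = length ds \<and> (\<forall>i<length ds. Ls ! i \<in> carrier_mat (fst (ds ! i)) (fst (ds ! i)))}"

definition block_offset :: "(nat \<times> nat) list \<Rightarrow> nat \<Rightarrow> nat" where
  "block_offset ds i = sum_list (map (\<lambda>(dL, dR). dL * dR) (take i ds))"

text \<open>Tr_C(X), with (+)_i L(H_L^i) represented as block-diagonal matrices.\<close>
definition partial_trace_vN :: "complex mat \<Rightarrow> (nat \<times> nat) list \<Rightarrow> complex mat \<Rightarrow> complex mat" where
  "partial_trace_vN V ds X = diag_block_mat (map (\<lambda>i. let (dL, dR) = ds ! i in
      ptrace_R dL dR (diag_block (block_offset ds i) (dL * dR) (V * X * mat_adjoint V))) [0..<length ds])"

text \<open>The algebra (+)_i L(C^(d_i)) as block-diagonal matrices.\<close>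
definition block_alg :: "nat list \<Rightarrow> complex mat set" where
  "block_alg ds = {diag_block_mat Ms | Ms. length Ms = length ds \<and>
      (\<forall>i<length ds. Ms ! i \<in> carrier_mat (ds ! i) (ds ! i))}"

definition psd :: "complex mat \<Rightarrow> bool" where
  "psd M \<longleftrightarrow> dim_row M = dim_col M \<and>
     (\<forall>v \<in> carrier_vec (dim_row M). let q = conjugate v \<bullet> (M *\<^sub>v v) in Im q = 0 \<and> 0 \<le> Re q)"

text \<open>(k x k) block (i,j) of size D, and id_k (x) Phi on M_k(M_D).\<close>
definition sub_block :: "nat \<Rightarrow> nat \<Rightarrow> nat \<Rightarrow> complex mat \<Rightarrow> complex mat" where
  "sub_block D i j X = mat D D (\<lambda>(a, b). X $$ (i * D + a, j * D + b))"

definition ampliate :: "nat \<Rightarrow> nat \<Rightarrow> nat \<Rightarrow> (complex mat \<Rightarrow> complex mat) \<Rightarrow> complex mat \<Rightarrow> complex mat" where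
  "ampliate k D D' \<Phi> X = mat (k * D') (k * D')
     (\<lambda>(p, q). \<Phi> (sub_block D (p div D') (q div D') X) $$ (p mod D', q mod D'))"

definition cptp_map :: "nat list \<Rightarrow> nat list \<Rightarrow> (complex mat \<Rightarrow> complex mat) \<Rightarrow> bool" where
  "cptp_map ds es \<Phi> \<longleftrightarrow>
     (\<forall>X\<in>block_alg ds. \<Phi> X \<in> block_alg es) \<and>
     (\<forall>X\<in>block_alg ds. \<forall>Y\<in>block_alg ds. \<forall>c a. \<Phi> (c \<cdot>\<^sub>m X + a \<cdot>\<^sub>m Y) = c \<cdot>\<^sub>m \<Phi> X + a \<cdot>\<^sub>m \<Phi> Y) \<and>
     (\<forall>X\<in>block_alg ds. mtrace (\<Phi> X) = mtrace X) \<and>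
     (\<forall>k X. X \<in> carrier_mat (k * sum_list ds) (k * sum_list ds) \<longrightarrow>
        (\<forall>i<k. \<forall>j<k. sub_block (sum_list ds) i j X \<in> block_alg ds) \<longrightarrow> psd X \<longrightarrow>
        psd (ampliate k (sum_list ds) (sum_list es) \<Phi> X))"

definition heisenberg_semicausal :: "complex mat \<Rightarrow> complex mat set \<Rightarrow> complex mat set \<Rightarrow> bool" where
  "heisenberg_semicausal U A B \<longleftrightarrow>
     (\<forall>Bo\<in>B. \<forall>Ao\<in>A. (mat_adjoint U * Bo * U) * Ao = Ao * (mat_adjoint U * Bo * U))"

text \<open>Schroedinger semi-causality of a channel E : L(C^n) -> L(C^m) from A to B,
  relative to decomposition data (VA, dsA) for A and (VB, dsB) for B'.\<close>
definition schroedinger_semicausal ::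
  "nat \<Rightarrow> (complex mat \<Rightarrow> complex mat) \<Rightarrow> complex mat \<Rightarrow> (nat \<times> nat) list \<Rightarrow> complex mat \<Rightarrow> (nat \<times> nat) list \<Rightarrow> bool" where
  "schroedinger_semicausal n E VA dsA VB dsB \<longleftrightarrow>
     (\<exists>E'. cptp_map (map fst dsA) (map fst dsB) E' \<and>
        (\<forall>\<rho> \<in> carrier_mat n n. partial_trace_vN VB dsB (E \<rho>) = E' (partial_trace_vN VA dsA \<rho>)))"

end

theory Submission
  imports Defs
begin


declare index_mult_mat(1)[simp del]

lemma adj_dim[simp]: "dim_row (mat_adjoint A) = dim_col A" "dim_col (mat_adjoint A) = dim_row A"
  unfolding mat_adjoint_def by auto

lemma adj_index[simp]: "i < dim_col A \<Longrightarrow> j < dim_row A \<Longrightarrow> mat_adjoint (A::complex mat) $$ (i,j) = cnj (A $$ (j,i))"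
  unfolding mat_adjoint_def mat_of_rows_def by simp

lemma adj_carrier[simp]: "A \<in> carrier_mat r c \<Longrightarrow> mat_adjoint A \<in> carrier_mat c r"
  unfolding carrier_mat_def by simp

lemma mult_index': "i < dim_row A \<Longrightarrow> j < dim_col B \<Longrightarrow> dim_col A = dim_row B \<Longrightarrow>
   (A * B) $$ (i,j) = (\<Sum>k<dim_col A. A $$ (i,k) * B $$ (k,j))"
  by (simp add: index_mult_mat(1) scalar_prod_def lessThan_atLeast0)

lemma adj_adj[simp]: "mat_adjoint (mat_adjoint (A::complex mat)) = A"
  by (rule eq_matI) auto

lemma adj_mult: "A \<in> carrier_mat r k \<Longrightarrow> B \<in> carrier_mat k c \<Longrightarrow>
   mat_adjoint (A * B :: complex mat) = mat_adjoint B * mat_adjoint A"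
  by (rule eq_matI) (auto simp: mult_index' mult.commute)

lemma mtrace_mult: "A \<in> carrier_mat r c \<Longrightarrow> B \<in> carrier_mat c r \<Longrightarrow>
   mtrace (A * B) = (\<Sum>i<r. \<Sum>k<c. A $$ (i,k) * B $$ (k,i))"
  unfolding mtrace_def by (simp add: mult_index')

lemma mtrace_comm: "A \<in> carrier_mat r c \<Longrightarrow> B \<in> carrier_mat c r \<Longrightarrow>
   mtrace (A * B) = mtrace (B * A)"
  by (simp add: mtrace_mult sum.swap[of _ "{..<r}"] mult.commute)

lemma mtrace_adj_zero: assumes "A \<in> carrier_mat r c" "mtrace (A * mat_adjoint A) = 0"
  shows "A = 0\<^sub>m r c"
proof -
  have "(\<Sum>i<r. \<Sum>k<c. A $$ (i,k) * cnj (A $$ (i,k))) = 0"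
    using assms mtrace_mult[of A r c "mat_adjoint A"] by simp
  hence "(\<Sum>i<r. \<Sum>k<c. complex_of_real ((cmod (A $$ (i,k)))^2)) = 0"
    by (simp only: complex_norm_square)
  hence "(\<Sum>i<r. \<Sum>k<c. (cmod (A $$ (i,k)))^2) = 0"
    by (metis (no_types, lifting) of_real_0 of_real_eq_iff of_real_sum sum.cong)
  hence "\<forall>i<r. \<forall>k<c. (cmod (A $$ (i,k)))^2 = 0"
    by (subst (asm) sum_nonneg_eq_0_iff) (auto simp: sum_nonneg_eq_0_iff sum_nonneg)
  thus ?thesis using assms by (intro eq_matI) auto
qed

section \<open>Index arithmetic\<close>

lemma sum_single: "finite S \<Longrightarrow> i \<in> S \<Longrightarrow> (\<And>j. j \<in> S \<Longrightarrow> j \<noteq> i \<Longrightarrow> f j = 0) \<Longrightarrow> sum f S = f i"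
  by (metis sum.remove sum.neutral DiffE insertCI add_0_right)

definition off :: "nat list \<Rightarrow> nat \<Rightarrow> nat" where
  "off ds i = sum_list (take i ds)"

lemma off_0[simp]: "off ds 0 = 0" by (simp add: off_def)
lemma off_Cons_Suc[simp]: "off (d # ds) (Suc i) = d + off ds i" by (simp add: off_def)

lemma sum_shift_ivl: "sum f {k..<k+(d::nat)} = (\<Sum>b<d. f (k+b))"
  by (induction d) (auto simp: add.commute)

lemma sum_split_add: "(\<Sum>p<(d::nat) + S. f p) = (\<Sum>p<d. f p) + (\<Sum>p<S. (f (d + p)::'a::comm_monoid_add))"
proof -
  have "{..<d + S} = {..<d} \<union> {d..<d+S}" by auto
  hence "(\<Sum>p<d + S. f p) = (\<Sum>p<d. f p) + (\<Sum>p\<in>{d..<d+S}. f p)"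
    by (simp add: sum.union_disjoint[of "{..<d}" "{d..<d+S}"] ivl_disj_int)
  also have "(\<Sum>p\<in>{d..<d+S}. f p) = (\<Sum>p<S. f (d + p))"
    by (rule sum_shift_ivl)
  finally show ?thesis .
qed

lemma R1: "(\<Sum>p<sum_list ds. f p) = (\<Sum>i<length ds. \<Sum>a<ds!i. (f (off ds i + a) :: 'a::comm_monoid_add))"
proof (induction ds arbitrary: f)
  case Nil then show ?case by simp
next
  case (Cons d ds)
  show ?case
    by (simp add: sum_split_add Cons sum.lessThan_Suc_shift add.assoc del: sum.lessThan_Suc)
qed

lemma R2: fixes f :: "nat \<Rightarrow> 'a::comm_monoid_add" shows "(\<Sum>x<dL*dR. f x) = (\<Sum>a<dL. \<Sum>b<dR. f (a*dR + b))"
proof -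
  have "(\<Sum>x<dL*dR. f x) = (\<Sum>a<dL. sum f {a*dR..<a*dR+dR})"
    using sum.nat_group[of f dR dL] by simp
  also have "\<dots> = (\<Sum>a<dL. \<Sum>b<dR. f (a*dR + b))"
    by (simp add: sum_shift_ivl)
  finally show ?thesis .
qed

lemma R0: "p < sum_list ds \<Longrightarrow> \<exists>i<length ds. \<exists>a<ds!i. p = off ds i + a"
proof (induction ds arbitrary: p)
  case Nil then show ?case by simp
next
  case (Cons d ds)
  show ?case
  proof (cases "p < d")
    case True
    then show ?thesis by (intro exI[of _ 0]) auto
  next
    case False
    have "p - d < sum_list ds" using Cons.prems False by simp
    then obtain i a where "i < length ds" "a < ds!i" "p - d = off ds i + a"
      using Cons.IH by blast
    then show ?thesis using False by (intro exI[of _ "Suc i"]) auto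
  qed
qed

lemma off_mono: "i < j \<Longrightarrow> j \<le> length ds \<Longrightarrow> off ds i + ds!i \<le> off ds j"
proof -
  assume ij: "i < j" "j \<le> length ds"
  have "take j ds = take (Suc i) ds @ drop (Suc i) (take j ds)"
    using ij by (metis append_take_drop_id min.absorb1 Suc_leI take_take)
  hence "off ds j = off ds (Suc i) + sum_list (drop (Suc i) (take j ds))"
    unfolding off_def by (metis sum_list_append)
  moreover have "off ds (Suc i) = off ds i + ds!i"
    using ij unfolding off_def by (simp add: take_Suc_conv_app_nth)
  ultimately show ?thesis by simp
qed

lemma off_bound: "i < length ds \<Longrightarrow> a < ds!i \<Longrightarrow> off ds i + a < sum_list ds"
  using off_mono[of i "length ds" ds] by (simp add: off_def)

lemma off_bound': "i < length ds \<Longrightarrow> off ds i + ds!i \<le> sum_list ds"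
  using off_mono[of i "length ds" ds] by (simp add: off_def)

lemma off_uniq: "i < length ds \<Longrightarrow> j < length ds \<Longrightarrow> a < ds!i \<Longrightarrow> b < ds!j \<Longrightarrow>
   (off ds i + a = off ds j + b) \<longleftrightarrow> (i = j \<and> a = b)"
proof -
  assume *: "i < length ds" "j < length ds" "a < ds!i" "b < ds!j"
  have "i < j \<Longrightarrow> off ds i + a < off ds j + b" using off_mono[of i j ds] * by simp
  moreover have "j < i \<Longrightarrow> off ds j + b < off ds i + a" using off_mono[of j i ds] * by simp
  ultimately show ?thesis by (cases i j rule: linorder_cases) auto
qed

lemma mul_uniq: "b < dR \<Longrightarrow> b' < dR \<Longrightarrow> (a*dR + b = a'*dR + (b'::nat)) \<longleftrightarrow> (a = a' \<and> b = b')"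
proof -
  assume "b < dR" "b' < dR"
  moreover have "(a*dR + b) div dR = a" "(a*dR + b) mod dR = b" "(a'*dR + b') div dR = a'" "(a'*dR + b') mod dR = b'"
    using calculation by auto
  ultimately show ?thesis by metis
qed

lemma mul_bound: "a < dL \<Longrightarrow> b < dR \<Longrightarrow> a*dR + b < dL*(dR::nat)"
proof -
  assume "a < dL" "b < dR"
  hence "a*dR + b < a*dR + dR" by simp
  also have "\<dots> = Suc a * dR" by simp
  also have "\<dots> \<le> dL * dR" using \<open>a < dL\<close> by (intro mult_right_mono) auto
  finally show ?thesis .
qed

section \<open>Block diagonal matrices\<close>

definition blocks_ok :: "'a mat list \<Rightarrow> nat list \<Rightarrow> bool" where
  "blocks_ok Ms ds \<longleftrightarrow> length Ms = length ds \<and> (\<forall>i<length ds. Ms!i \<in> carrier_mat (ds!i) (ds!i))"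

lemma blocks_ok_maps: "blocks_ok Ms ds \<Longrightarrow> map dim_row Ms = ds \<and> map dim_col Ms = ds"
  unfolding blocks_ok_def by (auto intro!: nth_equalityI)

lemma DBM_carrier: "blocks_ok Ms ds \<Longrightarrow> diag_block_mat Ms \<in> carrier_mat (sum_list ds) (sum_list ds)"
  using blocks_ok_maps[of Ms ds] unfolding carrier_mat_def by (simp add: dim_diag_block_mat)

lemma blocks_ok_Cons: "blocks_ok (M # Ms) (d # ds) \<longleftrightarrow> M \<in> carrier_mat d d \<and> blocks_ok Ms ds"
  unfolding blocks_ok_def by (auto simp: nth_Cons split: nat.splits)

lemma E1: "blocks_ok Ms ds \<Longrightarrow> i < length ds \<Longrightarrow> j < length ds \<Longrightarrow> a < ds!i \<Longrightarrow> b < ds!j \<Longrightarrow>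
  diag_block_mat Ms $$ (off ds i + a, off ds j + b) = (if i = j then Ms!i $$ (a,b) else 0)"
proof (induction Ms arbitrary: ds i j)
  case Nil then show ?case by (simp add: blocks_ok_def)
next
  case (Cons M Ms)
  obtain d ds' where ds: "ds = d # ds'" using Cons.prems(1) unfolding blocks_ok_def by (cases ds) auto
  have M: "M \<in> carrier_mat d d" and ok: "blocks_ok Ms ds'" using Cons.prems(1) ds blocks_ok_Cons by auto
  have D: "diag_block_mat Ms \<in> carrier_mat (sum_list ds') (sum_list ds')" using DBM_carrier[OF ok] .
  have bi: "off ds i + a < d + sum_list ds'" using off_bound[of i ds a] Cons.prems ds by simp
  have bj: "off ds j + b < d + sum_list ds'" using off_bound[of j ds b] Cons.prems ds by simp
  show ?case
  proof (cases i)
    case 0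
    then show ?thesis
    proof (cases j)
      case 0 then show ?thesis using \<open>i = 0\<close> M D Cons.prems ds by (simp add: Let_def)
    next
      case (Suc j')
      then show ?thesis using \<open>i = 0\<close> M D Cons.prems ds bi bj by (simp add: Let_def)
    qed
  next
    case (Suc i')
    then show ?thesis
    proof (cases j)
      case 0 then show ?thesis using \<open>i = Suc i'\<close> M D Cons.prems ds bi bj by (simp add: Let_def)
    next
      case (Suc j')
      have "diag_block_mat Ms $$ (off ds' i' + a, off ds' j' + b) = (if i' = j' then Ms!i' $$ (a,b) else 0)"
        using Cons.IH[OF ok, of i' j'] Cons.prems ds \<open>i = Suc i'\<close> Suc by simp
      then show ?thesis using \<open>i = Suc i'\<close> Suc M D Cons.prems ds bi bj by (simp add: Let_def)
    qed
  qed
qed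

lemma kron_carrier: "L \<in> carrier_mat dL dL \<Longrightarrow> kron L (1\<^sub>m dR) \<in> carrier_mat (dL*dR) (dL*dR)"
  unfolding kron_def carrier_mat_def by simp

lemma kron_index: "L \<in> carrier_mat dL dL \<Longrightarrow> a < dL \<Longrightarrow> a' < dL \<Longrightarrow> b < dR \<Longrightarrow> b' < dR \<Longrightarrow>
  kron L (1\<^sub>m dR) $$ (a*dR + b, a'*dR + b') = (if b = b' then L $$ (a,a') else 0)"
proof -
  assume *: "L \<in> carrier_mat dL dL" "a < dL" "a' < dL" "b < dR" "b' < dR"
  have "a*dR + b < dL*dR" "a'*dR + b' < dL*dR" using * mul_bound by auto
  thus ?thesis using * unfolding kron_def by simp
qed

abbreviation dLs :: "(nat \<times> nat) list \<Rightarrow> nat list" where "dLs ds \<equiv> map fst ds"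
abbreviation dPs :: "(nat \<times> nat) list \<Rightarrow> nat list" where "dPs ds \<equiv> map (\<lambda>(dL, dR). dL * dR) ds"

lemma case_prod_mult[simp]: "(case p of (x, y) \<Rightarrow> x * y) = fst p * (snd p :: nat)"
  by (cases p) simp

lemma dPs_nth[simp]: "i < length ds \<Longrightarrow> dPs ds ! i = fst (ds!i) * snd (ds!i)"
  by (simp add: split_beta)

definition Lfull :: "(nat \<times> nat) list \<Rightarrow> complex mat list \<Rightarrow> complex mat" where
  "Lfull ds Ls = diag_block_mat (map (\<lambda>i. kron (Ls ! i) (1\<^sub>m (snd (ds ! i)))) [0..<length ds])"

lemma Lfull_ok: "blocks_ok Ls (dLs ds) \<Longrightarrow>
   blocks_ok (map (\<lambda>i. kron (Ls ! i) (1\<^sub>m (snd (ds ! i)))) [0..<length ds]) (dPs ds)"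
  unfolding blocks_ok_def by (auto intro!: kron_carrier)

lemma Lfull_carrier: "blocks_ok Ls (dLs ds) \<Longrightarrow> Lfull ds Ls \<in> carrier_mat (sum_list (dPs ds)) (sum_list (dPs ds))"
  unfolding Lfull_def using DBM_carrier[OF Lfull_ok] .

lemma Lfull_index: assumes ok: "blocks_ok Ls (dLs ds)"
  and i: "i < length ds" "a < fst (ds!i)" "b < snd (ds!i)"
  and j: "j < length ds" "a' < fst (ds!j)" "b' < snd (ds!j)"
  shows "Lfull ds Ls $$ (off (dPs ds) i + (a * snd (ds!i) + b), off (dPs ds) j + (a' * snd (ds!j) + b'))
     = (if i = j then (if b = b' then Ls!i $$ (a,a') else 0) else 0)"
proof -
  have bi: "a * snd (ds!i) + b < dPs ds ! i" using i mul_bound by simp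
  have bj: "a' * snd (ds!j) + b' < dPs ds ! j" using j mul_bound by simp
  have L: "Ls!i \<in> carrier_mat (fst (ds!i)) (fst (ds!i))" using ok i unfolding blocks_ok_def by auto
  show ?thesis
  proof (cases "i = j")
    case True
    have Lj: "Ls!j \<in> carrier_mat (fst (ds!j)) (fst (ds!j))" using ok j unfolding blocks_ok_def by auto
    show ?thesis
      unfolding Lfull_def using E1[OF Lfull_ok[OF ok], of i j, OF _ _ bi bj] i j True
      by (simp add: kron_index[OF Lj])
  next
    case False
    then show ?thesis
      unfolding Lfull_def using E1[OF Lfull_ok[OF ok], of i j, OF _ _ bi bj] i j
      by simp
  qed
qed

definition PTE :: "(nat \<times> nat) list \<Rightarrow> complex mat \<Rightarrow> nat \<Rightarrow> nat \<Rightarrow> nat \<Rightarrow> complex" where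
  "PTE ds M i a a' = (\<Sum>b<snd (ds!i). M $$ (off (dPs ds) i + (a * snd (ds!i) + b), off (dPs ds) i + (a' * snd (ds!i) + b)))"

lemma block_offset_off: "block_offset ds i = off (dPs ds) i"
  unfolding block_offset_def off_def by (simp add: take_map)

lemma PT_ok: "blocks_ok (map (\<lambda>i. let (dL, dR) = ds ! i in
      ptrace_R dL dR (diag_block (block_offset ds i) (dL * dR) X)) [0..<length ds]) (dLs ds)"
  unfolding blocks_ok_def ptrace_R_def by (auto simp: split_beta Let_def)

lemma PT_carrier: "partial_trace_vN V ds X \<in> carrier_mat (sum_list (dLs ds)) (sum_list (dLs ds))"
  unfolding partial_trace_vN_def using DBM_carrier[OF PT_ok] .

lemma D2: assumes i: "i < length ds" "a < fst (ds!i)" and j: "j < length ds" "a' < fst (ds!j)"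
  shows "partial_trace_vN V ds X $$ (off (dLs ds) i + a, off (dLs ds) j + a') =
     (if i = j then PTE ds (V * X * mat_adjoint V) i a a' else 0)"
proof -
  show ?thesis
  proof (cases "i = j")
    case True
    have *: "\<And>b. b < snd (ds!j) \<Longrightarrow> a * snd (ds!j) + b < fst (ds!j) * snd (ds!j) \<and> a' * snd (ds!j) + b < fst (ds!j) * snd (ds!j)"
      using i j True mul_bound by auto
    show ?thesis
      unfolding partial_trace_vN_def using E1[OF PT_ok, where i=i and j=i and a=a and b=a'] i j True
      by (auto simp: split_beta Let_def ptrace_R_def diag_block_def PTE_def block_offset_off * intro!: sum.cong)
  next
    case False
    show ?thesis
      unfolding partial_trace_vN_def using E1[OF PT_ok, where i=i and j=j and a=a and b=a'] i j False
      by simp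
  qed
qed

lemma sum_block_reindex: fixes f :: "nat \<Rightarrow> 'a::comm_monoid_add"
  shows "(\<Sum>x<sum_list (dPs ds). f x) =
   (\<Sum>i<length ds. \<Sum>a<fst (ds!i). \<Sum>b<snd (ds!i). f (off (dPs ds) i + (a * snd (ds!i) + b)))"
  by (simp add: R1[of f "dPs ds"] R2)

lemma D1: assumes ok: "blocks_ok Ls (dLs ds)" and M: "M \<in> carrier_mat (sum_list (dPs ds)) (sum_list (dPs ds))"
  shows "mtrace (Lfull ds Ls * M) =
    (\<Sum>i<length ds. \<Sum>a<fst (ds!i). \<Sum>a'<fst (ds!i). Ls!i $$ (a,a') * PTE ds M i a' a)"
proof -
  let ?N = "sum_list (dPs ds)"
  let ?o = "off (dPs ds)"
  have "mtrace (Lfull ds Ls * M) = (\<Sum>x<?N. \<Sum>y<?N. Lfull ds Ls $$ (x,y) * M $$ (y,x))"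
    using mtrace_mult[OF Lfull_carrier[OF ok] M] .
  also have "\<dots> = (\<Sum>i<length ds. \<Sum>a<fst (ds!i). \<Sum>b<snd (ds!i).
      \<Sum>j<length ds. \<Sum>a'<fst (ds!j). \<Sum>b'<snd (ds!j).
        Lfull ds Ls $$ (?o i + (a * snd (ds!i) + b), ?o j + (a' * snd (ds!j) + b')) *
        M $$ (?o j + (a' * snd (ds!j) + b'), ?o i + (a * snd (ds!i) + b)))"
    by (simp add: sum_block_reindex)
  also have "\<dots> = (\<Sum>i<length ds. \<Sum>a<fst (ds!i). \<Sum>b<snd (ds!i). \<Sum>a'<fst (ds!i). 
        Ls!i $$ (a,a') *
        M $$ (?o i + (a' * snd (ds!i) + b), ?o i + (a * snd (ds!i) + b)))"
  proof (rule sum.cong[OF refl], rule sum.cong[OF refl], rule sum.cong[OF refl])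
    fix i a b assume iab: "i \<in> {..<length ds}" "a \<in> {..<fst (ds!i)}" "b \<in> {..<snd (ds!i)}"
    have "(\<Sum>j<length ds. \<Sum>a'<fst (ds!j). \<Sum>b'<snd (ds!j).
        Lfull ds Ls $$ (?o i + (a * snd (ds!i) + b), ?o j + (a' * snd (ds!j) + b')) *
        M $$ (?o j + (a' * snd (ds!j) + b'), ?o i + (a * snd (ds!i) + b)))
      = (\<Sum>a'<fst (ds!i). \<Sum>b'<snd (ds!i).
        Lfull ds Ls $$ (?o i + (a * snd (ds!i) + b), ?o i + (a' * snd (ds!i) + b')) *
        M $$ (?o i + (a' * snd (ds!i) + b'), ?o i + (a * snd (ds!i) + b)))"
      by (rule sum_single) (use iab in \<open>auto simp: Lfull_index[OF ok]\<close>)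
    also have "\<dots> = (\<Sum>a'<fst (ds!i). 
        Ls!i $$ (a,a') * M $$ (?o i + (a' * snd (ds!i) + b), ?o i + (a * snd (ds!i) + b)))"
    proof (rule sum.cong[OF refl])
      fix a' assume a': "a' \<in> {..<fst (ds!i)}"
      show "(\<Sum>b'<snd (ds!i).
        Lfull ds Ls $$ (?o i + (a * snd (ds!i) + b), ?o i + (a' * snd (ds!i) + b')) *
        M $$ (?o i + (a' * snd (ds!i) + b'), ?o i + (a * snd (ds!i) + b))) =
        Ls!i $$ (a,a') * M $$ (?o i + (a' * snd (ds!i) + b), ?o i + (a * snd (ds!i) + b))"
        by (subst sum_single[of _ b]) (use iab a' in \<open>auto simp: Lfull_index[OF ok]\<close>)
    qed
    finally show "(\<Sum>j<length ds. \<Sum>a'<fst (ds!j). \<Sum>b'<snd (ds!j).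
        Lfull ds Ls $$ (?o i + (a * snd (ds!i) + b), ?o j + (a' * snd (ds!j) + b')) *
        M $$ (?o j + (a' * snd (ds!j) + b'), ?o i + (a * snd (ds!i) + b))) = 
        (\<Sum>a'<fst (ds!i). 
        Ls!i $$ (a,a') * M $$ (?o i + (a' * snd (ds!i) + b), ?o i + (a * snd (ds!i) + b)))" .
  qed
  also have "\<dots> = (\<Sum>i<length ds. \<Sum>a<fst (ds!i). \<Sum>a'<fst (ds!i). Ls!i $$ (a,a') * PTE ds M i a' a)"
    unfolding PTE_def by (rule sum.cong[OF refl], rule sum.cong[OF refl], subst sum.swap) (simp add: sum_distrib_left)
  finally show ?thesis .
qed

lemma cnj_sq_nonneg: "0 \<le> cnj (z::complex) * z"
  using conjugate_square_positive[of z] by (simp add: mult.commute)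

lemma cnj_sq_zero: "cnj (z::complex) * z = 0 \<longleftrightarrow> z = 0"
  by simp

lemma sum_sq_zero: assumes "finite S" "(\<Sum>x\<in>S. (g x::complex)) = 0" "\<And>x. x \<in> S \<Longrightarrow> 0 \<le> g x" "x \<in> S"
  shows "g x = 0"
  using assms sum_nonneg_eq_0_iff by blast

lemma vN_dec_basic: assumes "vN_decomposition N C V ds"
  shows "V \<in> carrier_mat N N" "mat_adjoint V * V = 1\<^sub>m N" "V * mat_adjoint V = 1\<^sub>m N"
    "sum_list (dPs ds) = N" "\<And>i. i < length ds \<Longrightarrow> 0 < fst (ds!i) \<and> 0 < snd (ds!i)"
  using assms unfolding vN_decomposition_def unitary_mat_def 
  by (auto simp: split_beta dest!: nth_mem)

lemma vN_dec_set: assumes "vN_decomposition N C V ds"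
  shows "(\<lambda>X. V * X * mat_adjoint V) ` commutant N C = {Lfull ds Ls | Ls. blocks_ok Ls (dLs ds)}"
  using assms unfolding vN_decomposition_def blocks_ok_def Lfull_def by auto

lemma vN_Lfull: assumes "vN_decomposition N C V ds" "blocks_ok Ls (dLs ds)"
  shows "\<exists>D\<in>commutant N C. V * D * mat_adjoint V = Lfull ds Ls"
proof -
  have "Lfull ds Ls \<in> (\<lambda>X. V * X * mat_adjoint V) ` commutant N C"
    using vN_dec_set[OF assms(1)] assms(2) by auto
  thus ?thesis by auto
qed

lemma vN_comm: assumes "vN_decomposition N C V ds" "D \<in> commutant N C"
  shows "\<exists>Ls. blocks_ok Ls (dLs ds) \<and> V * D * mat_adjoint V = Lfull ds Ls"
  using vN_dec_set[OF assms(1)] assms(2) by blast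

lemma adj_cancel: "V \<in> carrier_mat N N \<Longrightarrow> mat_adjoint V * V = 1\<^sub>m N \<Longrightarrow> Z \<in> carrier_mat N c \<Longrightarrow>
  mat_adjoint V * (V * Z) = Z"
  by (simp add: assoc_mult_mat[of _ N N _ N _ c, symmetric])

lemma conj_trace: assumes V: "V \<in> carrier_mat N N" "mat_adjoint V * V = 1\<^sub>m N"
  and D: "D \<in> carrier_mat N N" and X: "X \<in> carrier_mat N N"
  shows "mtrace ((V * D * mat_adjoint V) * (V * X * mat_adjoint V)) = mtrace (D * X)"
proof -
  have c: "mat_adjoint V * (V * (X * mat_adjoint V)) = X * mat_adjoint V"
    using adj_cancel[of V N "X * mat_adjoint V" N] V X by auto
  have "(V * D * mat_adjoint V) * (V * X * mat_adjoint V) = V * (D * (mat_adjoint V * (V * (X * mat_adjoint V))))"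
    using V D X by (simp add: assoc_mult_mat[of _ N N _ N _ N])
  also have "\<dots> = V * (D * (X * mat_adjoint V))" unfolding c ..
  finally have e: "(V * D * mat_adjoint V) * (V * X * mat_adjoint V) = V * (D * (X * mat_adjoint V))" .
  have "mtrace (V * (D * (X * mat_adjoint V))) = mtrace ((D * (X * mat_adjoint V)) * V)"
    using V D X by (intro mtrace_comm[of _ N N]) auto
  also have "(D * (X * mat_adjoint V)) * V = D * (X * (mat_adjoint V * V))"
    using V D X by (simp add: assoc_mult_mat[of _ N N _ N _ N])
  also have "\<dots> = D * X" using V X by simp
  finally show ?thesis unfolding e .
qed

lemma PTE_zero: assumes dec: "vN_decomposition N C V ds" and X: "X \<in> carrier_mat N N"
  and tr: "\<And>D. D \<in> commutant N C \<Longrightarrow> mtrace (D * X) = 0"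
  and i: "i < length ds" "a < fst (ds!i)" "a' < fst (ds!i)"
  shows "PTE ds (V * X * mat_adjoint V) i a a' = 0"
proof -
  note B = vN_dec_basic[OF dec]
  let ?M = "V * X * mat_adjoint V"
  define Ls where "Ls = map (\<lambda>i. mat (fst (ds!i)) (fst (ds!i)) (\<lambda>(a,a'). cnj (PTE ds ?M i a' a))) [0..<length ds]"
  have ok: "blocks_ok Ls (dLs ds)" unfolding Ls_def blocks_ok_def by auto
  obtain D where D: "D \<in> commutant N C" "V * D * mat_adjoint V = Lfull ds Ls" using vN_Lfull[OF dec ok] by auto
  have Dc: "D \<in> carrier_mat N N" using D unfolding commutant_def by auto
  have M: "?M \<in> carrier_mat (sum_list (dPs ds)) (sum_list (dPs ds))" using B X by auto
  have "mtrace (Lfull ds Ls * ?M) = 0"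
    using conj_trace[OF B(1,2) Dc X] D tr by simp
  hence S: "(\<Sum>i<length ds. \<Sum>a<fst (ds!i). \<Sum>a'<fst (ds!i). cnj (PTE ds ?M i a' a) * PTE ds ?M i a' a) = 0"
    unfolding D1[OF ok M] by (simp add: Ls_def)
  have "(\<Sum>a<fst (ds!i). \<Sum>a'<fst (ds!i). cnj (PTE ds ?M i a' a) * PTE ds ?M i a' a) = 0"
    by (rule sum_sq_zero[OF _ S]) (auto intro!: sum_nonneg cnj_sq_nonneg simp: i)
  hence "(\<Sum>y<fst (ds!i). cnj (PTE ds ?M i y a') * PTE ds ?M i y a') = 0"
    using sum_sq_zero[of "{..<fst (ds!i)}" "\<lambda>x. \<Sum>y<fst (ds!i). cnj (PTE ds ?M i y x) * PTE ds ?M i y x" a'] i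
    by (auto intro!: sum_nonneg cnj_sq_nonneg)
  hence "cnj (PTE ds ?M i a a') * PTE ds ?M i a a' = 0"
    using sum_sq_zero[of "{..<fst (ds!i)}" "\<lambda>y. cnj (PTE ds ?M i y a') * PTE ds ?M i y a'" a] i
    by (auto intro!: sum_nonneg cnj_sq_nonneg)
  thus ?thesis by simp
qed

lemma PTE_zero_trace: assumes dec: "vN_decomposition N C V ds" and D: "D \<in> commutant N C"
  and Y: "Y \<in> carrier_mat N N"
  and z: "\<And>i a a'. i < length ds \<Longrightarrow> a < fst (ds!i) \<Longrightarrow> a' < fst (ds!i) \<Longrightarrow> PTE ds (V * Y * mat_adjoint V) i a a' = 0"
  shows "mtrace (D * Y) = 0"
proof -
  note B = vN_dec_basic[OF dec]
  obtain Ls where Ls: "blocks_ok Ls (dLs ds)" "V * D * mat_adjoint V = Lfull ds Ls" using vN_comm[OF dec D] by auto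
  have Dc: "D \<in> carrier_mat N N" using D unfolding commutant_def by auto
  have M: "V * Y * mat_adjoint V \<in> carrier_mat (sum_list (dPs ds)) (sum_list (dPs ds))" using B Y by auto
  have "mtrace (D * Y) = mtrace (Lfull ds Ls * (V * Y * mat_adjoint V))"
    using conj_trace[OF B(1,2) Dc Y] Ls by simp
  also have "\<dots> = 0" unfolding D1[OF Ls(1) M] by (simp add: z)
  finally show ?thesis .
qed

lemma mat_ext_blocks: assumes P: "P \<in> carrier_mat (sum_list ds) (sum_list ds)" and Q: "Q \<in> carrier_mat (sum_list ds) (sum_list ds)"
  and e: "\<And>i j a a'. i < length ds \<Longrightarrow> j < length ds \<Longrightarrow> a < ds!i \<Longrightarrow> a' < ds!j \<Longrightarrow>
     P $$ (off ds i + a, off ds j + a') = Q $$ (off ds i + a, off ds j + a')"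
  shows "P = Q"
proof (rule eq_matI)
  fix x y assume xy: "x < dim_row Q" "y < dim_col Q"
  obtain i a where "i < length ds" "a < ds!i" "x = off ds i + a" using R0[of x ds] xy Q by auto
  moreover obtain j a' where "j < length ds" "a' < ds!j" "y = off ds j + a'" using R0[of y ds] xy Q by auto
  ultimately show "P $$ (x,y) = Q $$ (x,y)" using e by simp
qed (use P Q in auto)

lemma PT_eq: assumes "\<And>i a a'. i < length ds \<Longrightarrow> a < fst (ds!i) \<Longrightarrow> a' < fst (ds!i) \<Longrightarrow>
     PTE ds (V * X * mat_adjoint V) i a a' = PTE ds (W * Y * mat_adjoint W) i a a'"
  shows "partial_trace_vN V ds X = partial_trace_vN W ds Y"
  by (rule mat_ext_blocks[OF PT_carrier PT_carrier]) (auto simp: D2 assms)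

lemma PT_zero: assumes "\<And>i a a'. i < length ds \<Longrightarrow> a < fst (ds!i) \<Longrightarrow> a' < fst (ds!i) \<Longrightarrow>
     PTE ds (V * X * mat_adjoint V) i a a' = 0"
  shows "partial_trace_vN V ds X = 0\<^sub>m (sum_list (dLs ds)) (sum_list (dLs ds))"
  by (rule mat_ext_blocks[OF PT_carrier]) (auto simp: D2 assms off_bound)

lemma PT_zero_PTE: assumes "partial_trace_vN V ds X = 0\<^sub>m (sum_list (dLs ds)) (sum_list (dLs ds))"
  and i: "i < length ds" "a < fst (ds!i)" "a' < fst (ds!i)"
  shows "PTE ds (V * X * mat_adjoint V) i a a' = 0"
proof -
  have "partial_trace_vN V ds X $$ (off (dLs ds) i + a, off (dLs ds) i + a') = 0"
    using assms off_bound[of i "dLs ds"] by simp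
  thus ?thesis using D2[OF i(1,2) i(1,3)] by simp
qed

lemma mtrace_PT: assumes M: "V * X * mat_adjoint V \<in> carrier_mat (sum_list (dPs ds)) (sum_list (dPs ds))"
  shows "mtrace (partial_trace_vN V ds X) = mtrace (V * X * mat_adjoint V)"
proof -
  have "mtrace (partial_trace_vN V ds X) = (\<Sum>p<sum_list (dLs ds). partial_trace_vN V ds X $$ (p,p))"
    unfolding mtrace_def using PT_carrier[of V ds X] by simp
  also have "\<dots> = (\<Sum>i<length ds. \<Sum>a<fst (ds!i). PTE ds (V * X * mat_adjoint V) i a a)"
    by (simp add: R1 D2)
  also have "\<dots> = (\<Sum>x<sum_list (dPs ds). (V * X * mat_adjoint V) $$ (x,x))"
    by (simp add: sum_block_reindex PTE_def)
  also have "\<dots> = mtrace (V * X * mat_adjoint V)" using M unfolding mtrace_def carrier_mat_def by simp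
  finally show ?thesis .
qed

lemma DBM_zero: "diag_block_mat (map (\<lambda>d. 0\<^sub>m d d) ds) = (0\<^sub>m (sum_list ds) (sum_list ds) :: 'a::zero mat)"
proof -
  have ok: "blocks_ok (map (\<lambda>d. 0\<^sub>m d d) ds) ds" unfolding blocks_ok_def by auto
  show ?thesis by (rule mat_ext_blocks[OF DBM_carrier[OF ok]]) (auto simp: E1[OF ok] off_bound)
qed

lemma block_alg_iff: "X \<in> block_alg ds \<longleftrightarrow> (\<exists>Ms. blocks_ok Ms ds \<and> X = diag_block_mat Ms)"
  unfolding block_alg_def blocks_ok_def by auto

lemma block_alg_carrier: "X \<in> block_alg ds \<Longrightarrow> X \<in> carrier_mat (sum_list ds) (sum_list ds)"
  using DBM_carrier by (auto simp: block_alg_iff)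

lemma block_alg_zero: "0\<^sub>m (sum_list ds) (sum_list ds) \<in> block_alg ds"
  unfolding block_alg_iff using DBM_zero[of ds, symmetric]
  by (intro exI[of _ "map (\<lambda>d. 0\<^sub>m d d) ds"]) (auto simp: blocks_ok_def)

lemma PT_block_alg: "partial_trace_vN V ds X \<in> block_alg (dLs ds)"
  unfolding block_alg_iff partial_trace_vN_def using PT_ok by blast

definition Lift :: "(nat \<times> nat) list \<Rightarrow> complex mat \<Rightarrow> complex mat" where
  "Lift ds Y = Lfull ds (map (\<lambda>i. (1 / of_nat (snd (ds!i))) \<cdot>\<^sub>m diag_block (off (dLs ds) i) (fst (ds!i)) Y) [0..<length ds])"

lemma Lift_ok: "blocks_ok (map (\<lambda>i. (1 / of_nat (snd (ds!i))) \<cdot>\<^sub>m diag_block (off (dLs ds) i) (fst (ds!i)) Y) [0..<length ds]) (dLs ds)"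
  unfolding blocks_ok_def diag_block_def by auto

lemma Lift_carrier: "Lift ds Y \<in> carrier_mat (sum_list (dPs ds)) (sum_list (dPs ds))"
  unfolding Lift_def using Lfull_carrier[OF Lift_ok] .

lemma Lift_index: assumes i: "i < length ds" "a < fst (ds!i)" "b < snd (ds!i)"
  and j: "j < length ds" "a' < fst (ds!j)" "b' < snd (ds!j)"
  shows "Lift ds Y $$ (off (dPs ds) i + (a * snd (ds!i) + b), off (dPs ds) j + (a' * snd (ds!j) + b'))
     = (if i = j then (if b = b' then Y $$ (off (dLs ds) i + a, off (dLs ds) i + a') / of_nat (snd (ds!i)) else 0) else 0)"
  using Lfull_index[OF Lift_ok i j] i j unfolding Lift_def by (auto simp: diag_block_def)

lemma PTE_Lift: assumes i: "i < length ds" "a < fst (ds!i)" "a' < fst (ds!i)" and pos: "0 < snd (ds!i)"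
  shows "PTE ds (Lift ds Y) i a a' = Y $$ (off (dLs ds) i + a, off (dLs ds) i + a')"
  unfolding PTE_def using i pos by (simp add: Lift_index)

lemma mtrace_Lift: assumes pos: "\<And>i. i < length ds \<Longrightarrow> 0 < snd (ds!i)"
  and Y: "Y \<in> carrier_mat (sum_list (dLs ds)) (sum_list (dLs ds))"
  shows "mtrace (Lift ds Y) = mtrace Y"
proof -
  have "mtrace (Lift ds Y) = (\<Sum>x<sum_list (dPs ds). Lift ds Y $$ (x,x))"
    unfolding mtrace_def using Lift_carrier[of ds Y] by simp
  also have "\<dots> = (\<Sum>i<length ds. \<Sum>a<fst (ds!i). Y $$ (off (dLs ds) i + a, off (dLs ds) i + a))"
    by (simp add: sum_block_reindex Lift_index pos)
  also have "\<dots> = mtrace Y" unfolding mtrace_def using Y by (simp add: R1)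
  finally show ?thesis .
qed

section \<open>Kraus maps\<close>

definition kraus :: "'j set \<Rightarrow> nat \<Rightarrow> nat \<Rightarrow> ('j \<Rightarrow> nat \<Rightarrow> nat \<Rightarrow> complex) \<Rightarrow> complex mat \<Rightarrow> complex mat" where
  "kraus J D' D K Y = mat D' D' (\<lambda>(p,q). \<Sum>j\<in>J. \<Sum>a<D. \<Sum>b<D. K j p a * Y $$ (a,b) * cnj (K j q b))"

lemma kraus_carrier[simp]: "kraus J D' D K Y \<in> carrier_mat D' D'"
  unfolding kraus_def by simp

lemma kraus_dim[simp]: "dim_row (kraus J D' D K Y) = D'" "dim_col (kraus J D' D K Y) = D'"
  unfolding kraus_def by simp_all

lemma rot3: "(\<Sum>p\<in>A. \<Sum>q\<in>B. \<Sum>j\<in>C. f p q j) = (\<Sum>j\<in>C. \<Sum>p\<in>A. \<Sum>q\<in>B. (f p q j :: 'a::comm_monoid_add))"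
proof -
  have "(\<Sum>p\<in>A. \<Sum>q\<in>B. \<Sum>j\<in>C. f p q j) = (\<Sum>p\<in>A. \<Sum>j\<in>C. \<Sum>q\<in>B. f p q j)"
    by (rule sum.cong[OF refl], rule sum.swap)
  also have "\<dots> = (\<Sum>j\<in>C. \<Sum>p\<in>A. \<Sum>q\<in>B. f p q j)" by (rule sum.swap)
  finally show ?thesis .
qed

lemma psd_kernel: assumes J: "finite J" and X: "X \<in> carrier_mat N N" and ps: "psd X"
  shows "psd (mat N' N' (\<lambda>(p,q). \<Sum>j\<in>J. \<Sum>x<N. \<Sum>y<N. T j p x * X $$ (x,y) * cnj (T j q y)))"
    (is "psd ?M")
proof -
  { fix v :: "complex vec" assume v: "v \<in> carrier_vec N'"
    define w where "w j = vec N (\<lambda>x. \<Sum>q<N'. cnj (T j q x) * v $ q)" for j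
    have w: "w j \<in> carrier_vec N" for j unfolding w_def by simp
    have "conjugate v \<bullet> (?M *\<^sub>v v) = (\<Sum>p<N'. cnj (v $ p) * (\<Sum>q<N'. ?M $$ (p,q) * v $ q))"
      using v by (simp add: scalar_prod_def lessThan_atLeast0 mult_mat_vec_def)
    also have "\<dots> = (\<Sum>p<N'. \<Sum>q<N'. \<Sum>j\<in>J. \<Sum>x<N. \<Sum>y<N. cnj (v $ p) * (T j p x * X $$ (x,y) * cnj (T j q y)) * v $ q)"
      by (simp add: sum_distrib_left sum_distrib_right mult.assoc)
    also have "\<dots> = (\<Sum>j\<in>J. \<Sum>p<N'. \<Sum>q<N'. \<Sum>x<N. \<Sum>y<N. cnj (v $ p) * (T j p x * X $$ (x,y) * cnj (T j q y)) * v $ q)"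
      by (rule rot3)
    also have "\<dots> = (\<Sum>j\<in>J. \<Sum>x<N. \<Sum>p<N'. \<Sum>y<N. \<Sum>q<N'. cnj (v $ p) * (T j p x * X $$ (x,y) * cnj (T j q y)) * v $ q)"
    proof (rule sum.cong[OF refl])
      fix j
      have "(\<Sum>p<N'. \<Sum>q<N'. \<Sum>x<N. \<Sum>y<N. cnj (v $ p) * (T j p x * X $$ (x,y) * cnj (T j q y)) * v $ q)
          = (\<Sum>p<N'. \<Sum>x<N. \<Sum>y<N. \<Sum>q<N'. cnj (v $ p) * (T j p x * X $$ (x,y) * cnj (T j q y)) * v $ q)"
        by (rule sum.cong[OF refl]) (rule rot3[symmetric])
      also have "\<dots> = (\<Sum>x<N. \<Sum>p<N'. \<Sum>y<N. \<Sum>q<N'. cnj (v $ p) * (T j p x * X $$ (x,y) * cnj (T j q y)) * v $ q)"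
        by (rule sum.swap)
      finally show "(\<Sum>p<N'. \<Sum>q<N'. \<Sum>x<N. \<Sum>y<N. cnj (v $ p) * (T j p x * X $$ (x,y) * cnj (T j q y)) * v $ q)
          = (\<Sum>x<N. \<Sum>p<N'. \<Sum>y<N. \<Sum>q<N'. cnj (v $ p) * (T j p x * X $$ (x,y) * cnj (T j q y)) * v $ q)" .
    qed
    also have "\<dots> = (\<Sum>j\<in>J. conjugate (w j) \<bullet> (X *\<^sub>v w j))"
    proof (rule sum.cong[OF refl])
      fix j
      have "conjugate (w j) \<bullet> (X *\<^sub>v w j) = (\<Sum>x<N. (\<Sum>p<N'. T j p x * cnj (v $ p)) * (\<Sum>y<N. X $$ (x,y) * (\<Sum>q<N'. cnj (T j q y) * v $ q)))"
        using X w[of j] by (simp add: scalar_prod_def lessThan_atLeast0 mult_mat_vec_def w_def cnj_sum)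
      also have "\<dots> = (\<Sum>x<N. \<Sum>y<N. \<Sum>q<N'. \<Sum>p<N'. cnj (v $ p) * (T j p x * X $$ (x,y) * cnj (T j q y)) * v $ q)"
        by (simp add: sum_distrib_left sum_distrib_right mult_ac)
      also have "\<dots> = (\<Sum>x<N. \<Sum>p<N'. \<Sum>y<N. \<Sum>q<N'. cnj (v $ p) * (T j p x * X $$ (x,y) * cnj (T j q y)) * v $ q)"
        by (rule sum.cong[OF refl], rule rot3)
      finally show "(\<Sum>x<N. \<Sum>p<N'. \<Sum>y<N. \<Sum>q<N'. cnj (v $ p) * (T j p x * X $$ (x,y) * cnj (T j q y)) * v $ q)
          = conjugate (w j) \<bullet> (X *\<^sub>v w j)" by simp
    qed
    finally have eq: "conjugate v \<bullet> (?M *\<^sub>v v) = (\<Sum>j\<in>J. conjugate (w j) \<bullet> (X *\<^sub>v w j))" .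
    have "\<And>j. Im (conjugate (w j) \<bullet> (X *\<^sub>v w j)) = 0 \<and> 0 \<le> Re (conjugate (w j) \<bullet> (X *\<^sub>v w j))"
      using ps X w unfolding psd_def Let_def by auto
    hence "Im (conjugate v \<bullet> (?M *\<^sub>v v)) = 0 \<and> 0 \<le> Re (conjugate v \<bullet> (?M *\<^sub>v v))"
      unfolding eq by (simp add: sum_nonneg)
  }
  thus ?thesis unfolding psd_def Let_def by simp
qed

lemma ampliate_kraus_eq:
  "ampliate k D D' (kraus J D' D K) X = mat (k*D') (k*D') (\<lambda>(p,q). \<Sum>j\<in>J. \<Sum>x<k*D. \<Sum>y<k*D.
     (if p div D' = x div D then K j (p mod D') (x mod D) else 0) * X $$ (x,y) *
     cnj (if q div D' = y div D then K j (q mod D') (y mod D) else 0))" (is "_ = ?R")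
proof (rule eq_matI)
  fix p q assume "p < dim_row ?R" "q < dim_col ?R"
  hence pq: "p < k*D'" "q < k*D'" by auto
  hence Dp: "0 < D'" by (cases D') auto
  have pk: "p div D' < k" "q div D' < k" using pq Dp by (simp_all add: less_mult_imp_div_less)
  have inner: "(\<Sum>x<k*D. \<Sum>y<k*D.
     (if p div D' = x div D then K j (p mod D') (x mod D) else 0) * X $$ (x,y) *
     cnj (if q div D' = y div D then K j (q mod D') (y mod D) else 0))
     = (\<Sum>a<D. \<Sum>b<D. K j (p mod D') a * X $$ (p div D' * D + a, q div D' * D + b) * cnj (K j (q mod D') b))" for j
  proof -
    have "(\<Sum>x<k*D. \<Sum>y<k*D.
     (if p div D' = x div D then K j (p mod D') (x mod D) else 0) * X $$ (x,y) *
     cnj (if q div D' = y div D then K j (q mod D') (y mod D) else 0))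
     = (\<Sum>P<k. \<Sum>a<D. \<Sum>Q<k. \<Sum>b<D.
     (if p div D' = P then K j (p mod D') a else 0) * X $$ (P*D+a,Q*D+b) *
     cnj (if q div D' = Q then K j (q mod D') b else 0))"
      unfolding R2 by (intro sum.cong refl) auto
    also have "\<dots> = (\<Sum>a<D. \<Sum>b<D. K j (p mod D') a * X $$ (p div D' * D + a, q div D' * D + b) * cnj (K j (q mod D') b))"
    proof -
      have "(\<Sum>P<k. \<Sum>a<D. \<Sum>Q<k. \<Sum>b<D.
     (if p div D' = P then K j (p mod D') a else 0) * X $$ (P*D+a,Q*D+b) *
     cnj (if q div D' = Q then K j (q mod D') b else 0)) = 
       (\<Sum>a<D. \<Sum>Q<k. \<Sum>b<D.
     K j (p mod D') a * X $$ (p div D' * D+a,Q*D+b) *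
     cnj (if q div D' = Q then K j (q mod D') b else 0))"
        by (subst sum_single[of _ "p div D'"]) (use pk in auto)
      also have "\<dots> = (\<Sum>a<D. \<Sum>b<D. K j (p mod D') a * X $$ (p div D' * D + a, q div D' * D + b) * cnj (K j (q mod D') b))"
        by (rule sum.cong[OF refl], subst sum_single[of _ "q div D'"]) (use pk in auto)
      finally show ?thesis .
    qed
    finally show ?thesis .
  qed
  show "ampliate k D D' (kraus J D' D K) X $$ (p,q) = mat (k*D') (k*D') (\<lambda>(p,q). \<Sum>j\<in>J. \<Sum>x<k*D. \<Sum>y<k*D.
     (if p div D' = x div D then K j (p mod D') (x mod D) else 0) * X $$ (x,y) *
     cnj (if q div D' = y div D then K j (q mod D') (y mod D) else 0)) $$ (p,q)"
    using pq Dp unfolding ampliate_def kraus_def by (simp add: inner sub_block_def)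
qed (auto simp: ampliate_def)

lemma cp_kraus: "finite J \<Longrightarrow> X \<in> carrier_mat (k*D) (k*D) \<Longrightarrow> psd X \<Longrightarrow> psd (ampliate k D D' (kraus J D' D K) X)"
  unfolding ampliate_kraus_eq by (rule psd_kernel)

section \<open>Kraus forms of partial trace and lift\<close>

definition ind :: "(nat \<times> nat) list \<Rightarrow> nat \<times> nat \<Rightarrow> nat \<Rightarrow> nat \<Rightarrow> bool" where
  "ind ds ib p x \<longleftrightarrow> (\<exists>a<fst (ds!fst ib). p = off (dLs ds) (fst ib) + a \<and> x = off (dPs ds) (fst ib) + (a * snd (ds!fst ib) + snd ib))"

definition Jset :: "(nat \<times> nat) list \<Rightarrow> (nat \<times> nat) set" where
  "Jset ds = Sigma {..<length ds} (\<lambda>i. {..<snd (ds!i)})"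

lemma Jset_finite[simp]: "finite (Jset ds)" unfolding Jset_def by auto

lemma sum_Jset: "(\<Sum>ib\<in>Jset ds. f ib) = (\<Sum>i<length ds. \<Sum>b<snd (ds!i). f (i,b))"
  unfolding Jset_def by (simp add: sum.Sigma)

lemma indL: assumes "i < length ds" "a < fst (ds!i)" "i0 < length ds"
  shows "ind ds (i0,b0) (off (dLs ds) i + a) x \<longleftrightarrow> (i0 = i \<and> x = off (dPs ds) i + (a * snd (ds!i) + b0))"
proof
  assume "ind ds (i0,b0) (off (dLs ds) i + a) x"
  then obtain a' where a': "a' < fst (ds!i0)" "off (dLs ds) i + a = off (dLs ds) i0 + a'"
     "x = off (dPs ds) i0 + (a' * snd (ds!i0) + b0)" unfolding ind_def by auto
  have "i = i0 \<and> a = a'" using off_uniq[of i "dLs ds" i0 a a'] a' assms by simp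
  thus "i0 = i \<and> x = off (dPs ds) i + (a * snd (ds!i) + b0)" using a' by simp
next
  assume "i0 = i \<and> x = off (dPs ds) i + (a * snd (ds!i) + b0)"
  thus "ind ds (i0,b0) (off (dLs ds) i + a) x" unfolding ind_def using assms by auto
qed

lemma indP: assumes "i < length ds" "a < fst (ds!i)" "b < snd (ds!i)" "i0 < length ds" "b0 < snd (ds!i0)"
  shows "ind ds (i0,b0) p (off (dPs ds) i + (a * snd (ds!i) + b)) \<longleftrightarrow> (i0 = i \<and> b0 = b \<and> p = off (dLs ds) i + a)"
proof
  assume "ind ds (i0,b0) p (off (dPs ds) i + (a * snd (ds!i) + b))"
  then obtain a' where a': "a' < fst (ds!i0)" "p = off (dLs ds) i0 + a'"
     "off (dPs ds) i + (a * snd (ds!i) + b) = off (dPs ds) i0 + (a' * snd (ds!i0) + b0)" unfolding ind_def by auto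
  have "a * snd (ds!i) + b < dPs ds ! i" "a' * snd (ds!i0) + b0 < dPs ds ! i0" using assms a' mul_bound by auto
  hence ii: "i = i0" and eq: "a * snd (ds!i) + b = a' * snd (ds!i0) + b0"
    using off_uniq[of i "dPs ds" i0] a' assms by auto
  have "a = a' \<and> b = b0" using mul_uniq[of b "snd (ds!i)" b0 a a'] eq ii assms by simp
  hence "i = i0 \<and> a = a' \<and> b = b0" using ii by simp
  thus "i0 = i \<and> b0 = b \<and> p = off (dLs ds) i + a" using a' by simp
next
  assume "i0 = i \<and> b0 = b \<and> p = off (dLs ds) i + a"
  thus "ind ds (i0,b0) p (off (dPs ds) i + (a * snd (ds!i) + b))" unfolding ind_def using assms by auto
qed

lemma sum_indL: assumes "i < length ds" "a < fst (ds!i)" "i0 < length ds" "b0 < snd (ds!i0)"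
  shows "(\<Sum>x<sum_list (dPs ds). if ind ds (i0,b0) (off (dLs ds) i + a) x then g x else 0) =
    (if i0 = i then g (off (dPs ds) i + (a * snd (ds!i) + b0)) else 0)"
proof (cases "i0 = i")
  case True
  have "off (dPs ds) i + (a * snd (ds!i) + b0) < sum_list (dPs ds)"
    using off_bound[of i "dPs ds"] mul_bound[of a "fst (ds!i)" b0 "snd (ds!i)"] assms True by simp
  thus ?thesis using True
    by (subst sum_single[of _ "off (dPs ds) i + (a * snd (ds!i) + b0)"]) (auto simp: indL[OF assms(1,2,1)])
next
  case False
  thus ?thesis by (simp add: indL[OF assms(1,2,3)])
qed

lemma sum_indP: assumes "i < length ds" "a < fst (ds!i)" "b < snd (ds!i)" "i0 < length ds" "b0 < snd (ds!i0)"
  shows "(\<Sum>p<sum_list (dLs ds). if ind ds (i0,b0) p (off (dPs ds) i + (a * snd (ds!i) + b)) then g p else 0) =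
    (if i0 = i \<and> b0 = b then g (off (dLs ds) i + a) else 0)"
proof (cases "i0 = i \<and> b0 = b")
  case True
  have "off (dLs ds) i + a < sum_list (dLs ds)"
    using off_bound[of i "dLs ds"] assms by simp
  thus ?thesis using True
    by (subst sum_single[of _ "off (dLs ds) i + a"]) (auto simp: indP[OF assms(1,2,3,1,3)])
next
  case False
  thus ?thesis by (auto simp: indP[OF assms])
qed

lemma mat_ext_blocks2: assumes P: "P \<in> carrier_mat (sum_list (dPs ds)) (sum_list (dPs ds))"
  and Q: "Q \<in> carrier_mat (sum_list (dPs ds)) (sum_list (dPs ds))"
  and e: "\<And>i j a a' b b'. i < length ds \<Longrightarrow> j < length ds \<Longrightarrow> a < fst (ds!i) \<Longrightarrow> b < snd (ds!i) \<Longrightarrow>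
     a' < fst (ds!j) \<Longrightarrow> b' < snd (ds!j) \<Longrightarrow>
     P $$ (off (dPs ds) i + (a * snd (ds!i) + b), off (dPs ds) j + (a' * snd (ds!j) + b')) =
     Q $$ (off (dPs ds) i + (a * snd (ds!i) + b), off (dPs ds) j + (a' * snd (ds!j) + b'))"
  shows "P = Q"
proof (rule mat_ext_blocks[OF P Q])
  fix i j z z' assume ij: "i < length (dPs ds)" "j < length (dPs ds)" "z < dPs ds ! i" "z' < dPs ds ! j"
  let ?r = "snd (ds!i)" and ?r' = "snd (ds!j)"
  have zr: "z < fst (ds!i) * ?r" "z' < fst (ds!j) * ?r'" using ij by auto
  hence pos: "0 < ?r" "0 < ?r'" by (auto intro: ccontr)
  have "z div ?r < fst (ds!i)" "z' div ?r' < fst (ds!j)" using zr pos by (auto simp: less_mult_imp_div_less)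
  moreover have "z = z div ?r * ?r + z mod ?r" "z' = z' div ?r' * ?r' + z' mod ?r'" by auto
  moreover have "z mod ?r < ?r" "z' mod ?r' < ?r'" using pos by auto
  ultimately show "P $$ (off (dPs ds) i + z, off (dPs ds) j + z') = Q $$ (off (dPs ds) i + z, off (dPs ds) j + z')"
    using e[of i j "z div ?r" "z mod ?r" "z' div ?r'" "z' mod ?r'"] ij by simp
qed

definition K3 :: "(nat \<times> nat) list \<Rightarrow> nat \<times> nat \<Rightarrow> nat \<Rightarrow> nat \<Rightarrow> complex" where
  "K3 ds ib p x = (if ind ds ib p x then 1 else 0)"

lemma K3_double: assumes i: "i < length ds" "a < fst (ds!i)" and j: "j < length ds" "a' < fst (ds!j)"
  and ib: "i0 < length ds" "b0 < snd (ds!i0)"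
  shows "(\<Sum>x<sum_list (dPs ds). \<Sum>y<sum_list (dPs ds).
      K3 ds (i0,b0) (off (dLs ds) i + a) x * M $$ (x,y) * cnj (K3 ds (i0,b0) (off (dLs ds) j + a') y)) =
    (if i0 = i \<and> i0 = j then M $$ (off (dPs ds) i + (a * snd (ds!i) + b0), off (dPs ds) j + (a' * snd (ds!j) + b0)) else 0)"
proof -
  let ?p = "off (dLs ds) i + a" and ?q = "off (dLs ds) j + a'"
  have "(\<Sum>x<sum_list (dPs ds). \<Sum>y<sum_list (dPs ds).
      K3 ds (i0,b0) ?p x * M $$ (x,y) * cnj (K3 ds (i0,b0) ?q y)) =
     (\<Sum>x<sum_list (dPs ds). if ind ds (i0,b0) ?p x then
        (\<Sum>y<sum_list (dPs ds). if ind ds (i0,b0) ?q y then M $$ (x,y) else 0) else 0)"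
    by (rule sum.cong[OF refl]) (auto simp: K3_def intro!: sum.cong)
  also have "\<dots> = (if i0 = i then (\<Sum>y<sum_list (dPs ds). if ind ds (i0,b0) ?q y then
        M $$ (off (dPs ds) i + (a * snd (ds!i) + b0), y) else 0) else 0)"
    by (rule sum_indL[OF i ib])
  also have "\<dots> = (if i0 = i \<and> i0 = j then M $$ (off (dPs ds) i + (a * snd (ds!i) + b0), off (dPs ds) j + (a' * snd (ds!j) + b0)) else 0)"
    using sum_indL[OF j ib, of "\<lambda>y. M $$ (off (dPs ds) i + (a * snd (ds!i) + b0), y)"]
    by (cases "i0 = i") simp_all
  finally show ?thesis .
qed

lemma PT_kraus: assumes M: "V * X * mat_adjoint V \<in> carrier_mat (sum_list (dPs ds)) (sum_list (dPs ds))"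
  shows "partial_trace_vN V ds X = kraus (Jset ds) (sum_list (dLs ds)) (sum_list (dPs ds)) (K3 ds) (V * X * mat_adjoint V)"
proof (rule mat_ext_blocks[OF PT_carrier kraus_carrier])
  fix i j a a' assume ij: "i < length (dLs ds)" "j < length (dLs ds)" "a < dLs ds ! i" "a' < dLs ds ! j"
  hence ij': "i < length ds" "j < length ds" "a < fst (ds!i)" "a' < fst (ds!j)" by auto
  have b: "off (dLs ds) i + a < sum_list (dLs ds)" "off (dLs ds) j + a' < sum_list (dLs ds)"
    using off_bound ij by auto
  have "kraus (Jset ds) (sum_list (dLs ds)) (sum_list (dPs ds)) (K3 ds) (V * X * mat_adjoint V) $$ (off (dLs ds) i + a, off (dLs ds) j + a')
     = (\<Sum>i0<length ds. \<Sum>b0<snd (ds!i0). (if i0 = i \<and> i0 = j then (V * X * mat_adjoint V) $$ (off (dPs ds) i + (a * snd (ds!i) + b0), off (dPs ds) j + (a' * snd (ds!j) + b0)) else 0))"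
    unfolding kraus_def using b by (simp add: sum_Jset K3_double[OF ij'(1,3) ij'(2,4)])
  also have "\<dots> = (if i = j then PTE ds (V * X * mat_adjoint V) i a a' else 0)"
    by (subst sum_single[of _ i]) (use ij' in \<open>auto simp: PTE_def\<close>)
  finally show "partial_trace_vN V ds X $$ (off (dLs ds) i + a, off (dLs ds) j + a') =
     kraus (Jset ds) (sum_list (dLs ds)) (sum_list (dPs ds)) (K3 ds) (V * X * mat_adjoint V) $$ (off (dLs ds) i + a, off (dLs ds) j + a')"
    using D2[OF ij'(1,3) ij'(2,4)] by simp
qed

definition cfac :: "(nat \<times> nat) list \<Rightarrow> nat \<Rightarrow> complex" where
  "cfac ds i = complex_of_real (sqrt (1 / real (snd (ds!i))))"

lemma cfac_sq: "cfac ds i * cnj (cfac ds i) = 1 / of_nat (snd (ds!i))"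
proof -
  have e: "sqrt (1 / real (snd (ds!i))) * sqrt (1 / real (snd (ds!i))) = 1 / real (snd (ds!i))"
    using real_sqrt_mult_self[of "1 / real (snd (ds!i))"] by simp
  have "cfac ds i * cnj (cfac ds i) = complex_of_real (sqrt (1 / real (snd (ds!i)))) * complex_of_real (sqrt (1 / real (snd (ds!i))))"
    unfolding cfac_def by simp
  also have "\<dots> = complex_of_real (sqrt (1 / real (snd (ds!i))) * sqrt (1 / real (snd (ds!i))))"
    by (simp only: of_real_mult)
  also have "\<dots> = complex_of_real (1 / real (snd (ds!i)))" by (simp only: e)
  also have "\<dots> = 1 / of_nat (snd (ds!i))" by simp
  finally show ?thesis .
qed

definition K1 :: "(nat \<times> nat) list \<Rightarrow> nat \<times> nat \<Rightarrow> nat \<Rightarrow> nat \<Rightarrow> complex" where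
  "K1 ds ib x p = cfac ds (fst ib) * (if ind ds ib p x then 1 else 0)"

lemma K1_double: assumes i: "i < length ds" "a < fst (ds!i)" "b < snd (ds!i)" and j: "j < length ds" "a' < fst (ds!j)" "b' < snd (ds!j)"
  and ib: "i0 < length ds" "b0 < snd (ds!i0)"
  shows "(\<Sum>p<sum_list (dLs ds). \<Sum>q<sum_list (dLs ds).
      K1 ds (i0,b0) (off (dPs ds) i + (a * snd (ds!i) + b)) p * Y $$ (p,q) * cnj (K1 ds (i0,b0) (off (dPs ds) j + (a' * snd (ds!j) + b')) q)) =
    (if i0 = i \<and> b0 = b \<and> i0 = j \<and> b0 = b' then cfac ds i0 * cnj (cfac ds i0) * Y $$ (off (dLs ds) i + a, off (dLs ds) j + a') else 0)"
proof -
  let ?x = "off (dPs ds) i + (a * snd (ds!i) + b)" and ?y = "off (dPs ds) j + (a' * snd (ds!j) + b')"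
  let ?c = "cfac ds i0"
  have "(\<Sum>p<sum_list (dLs ds). \<Sum>q<sum_list (dLs ds).
      K1 ds (i0,b0) ?x p * Y $$ (p,q) * cnj (K1 ds (i0,b0) ?y q)) =
     (\<Sum>p<sum_list (dLs ds). if ind ds (i0,b0) p ?x then
        (\<Sum>q<sum_list (dLs ds). if ind ds (i0,b0) q ?y then ?c * Y $$ (p,q) * cnj ?c else 0) else 0)"
    by (rule sum.cong[OF refl]) (auto simp: K1_def intro!: sum.cong)
  also have "\<dots> = (if i0 = i \<and> b0 = b then (\<Sum>q<sum_list (dLs ds). if ind ds (i0,b0) q ?y then
        ?c * Y $$ (off (dLs ds) i + a, q) * cnj ?c else 0) else 0)"
    by (rule sum_indP[OF i ib])
  also have "\<dots> = (if i0 = i \<and> b0 = b \<and> i0 = j \<and> b0 = b' then ?c * cnj ?c * Y $$ (off (dLs ds) i + a, off (dLs ds) j + a') else 0)"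
    unfolding sum_indP[OF j ib, of "\<lambda>q. ?c * Y $$ (off (dLs ds) i + a, q) * cnj ?c"]
    by (simp add: mult_ac)
  finally show ?thesis .
qed

lemma Lift_kraus: assumes Y: "Y \<in> carrier_mat (sum_list (dLs ds)) (sum_list (dLs ds))"
  shows "Lift ds Y = kraus (Jset ds) (sum_list (dPs ds)) (sum_list (dLs ds)) (K1 ds) Y"
proof (rule mat_ext_blocks2[OF Lift_carrier kraus_carrier])
  fix i j a a' b b' assume ij: "i < length ds" "j < length ds" "a < fst (ds!i)" "b < snd (ds!i)"
     "a' < fst (ds!j)" "b' < snd (ds!j)"
  let ?x = "off (dPs ds) i + (a * snd (ds!i) + b)" and ?y = "off (dPs ds) j + (a' * snd (ds!j) + b')"
  have bx: "?x < sum_list (dPs ds)" "?y < sum_list (dPs ds)"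
    using off_bound[of i "dPs ds"] off_bound[of j "dPs ds"] mul_bound ij by auto
  have "kraus (Jset ds) (sum_list (dPs ds)) (sum_list (dLs ds)) (K1 ds) Y $$ (?x, ?y)
     = (\<Sum>i0<length ds. \<Sum>b0<snd (ds!i0). (if i0 = i \<and> b0 = b \<and> i0 = j \<and> b0 = b' then cfac ds i0 * cnj (cfac ds i0) * Y $$ (off (dLs ds) i + a, off (dLs ds) j + a') else 0))"
    unfolding kraus_def using bx by (simp add: sum_Jset K1_double[OF ij(1,3,4) ij(2,5,6)])
  also have "\<dots> = (if i = j then (if b = b' then Y $$ (off (dLs ds) i + a, off (dLs ds) i + a') / of_nat (snd (ds!i)) else 0) else 0)"
    by (subst sum_single[of _ i]) (use ij in \<open>auto simp: cfac_sq\<close>)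
  finally show "Lift ds Y $$ (?x, ?y) = kraus (Jset ds) (sum_list (dPs ds)) (sum_list (dLs ds)) (K1 ds) Y $$ (?x, ?y)"
    using Lift_index[OF ij(1,3,4) ij(2,5,6)] by simp
qed




declare index_mult_mat(1)[simp del]

lemma conj_kraus: assumes G: "G \<in> carrier_mat D' D" and Y: "Y \<in> carrier_mat D D"
  shows "G * Y * mat_adjoint G = kraus (UNIV::unit set) D' D (\<lambda>_ p a. G $$ (p,a)) Y"
proof (rule eq_matI)
  fix p q assume "p < dim_row (kraus (UNIV::unit set) D' D (\<lambda>_ p a. G $$ (p,a)) Y)" "q < dim_col (kraus (UNIV::unit set) D' D (\<lambda>_ p a. G $$ (p,a)) Y)"
  hence pq: "p < D'" "q < D'" by auto
  have "(G * Y * mat_adjoint G) $$ (p,q) = (\<Sum>b<D. (\<Sum>a<D. G $$ (p,a) * Y $$ (a,b)) * cnj (G $$ (q,b)))"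
    using G Y pq by (simp add: mult_index')
  also have "\<dots> = (\<Sum>a<D. \<Sum>b<D. G $$ (p,a) * Y $$ (a,b) * cnj (G $$ (q,b)))"
    unfolding sum_distrib_right by (rule sum.swap)
  finally show "(G * Y * mat_adjoint G) $$ (p,q) = kraus (UNIV::unit set) D' D (\<lambda>_ p a. G $$ (p,a)) Y $$ (p,q)"
    using pq unfolding kraus_def by simp
qed (use G Y in auto)

lemma kraus_linear: assumes X: "X \<in> carrier_mat D D" and Y: "Y \<in> carrier_mat D D"
  shows "kraus J D' D K (c \<cdot>\<^sub>m X + a \<cdot>\<^sub>m Y) = c \<cdot>\<^sub>m kraus J D' D K X + a \<cdot>\<^sub>m kraus J D' D K Y"
proof (rule eq_matI)
  fix p q assume "p < dim_row (c \<cdot>\<^sub>m kraus J D' D K X + a \<cdot>\<^sub>m kraus J D' D K Y)"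
    "q < dim_col (c \<cdot>\<^sub>m kraus J D' D K X + a \<cdot>\<^sub>m kraus J D' D K Y)"
  hence pq: "p < D'" "q < D'" by auto
  show "kraus J D' D K (c \<cdot>\<^sub>m X + a \<cdot>\<^sub>m Y) $$ (p,q) = (c \<cdot>\<^sub>m kraus J D' D K X + a \<cdot>\<^sub>m kraus J D' D K Y) $$ (p,q)"
  proof -
    have e: "\<And>j x y. K j p x * (c * X $$ (x,y) + a * Y $$ (x,y)) * cnj (K j q y) =
       c * (K j p x * X $$ (x,y) * cnj (K j q y)) + a * (K j p x * Y $$ (x,y) * cnj (K j q y))"
      by (simp add: algebra_simps)
    have "\<And>x y. x < D \<Longrightarrow> y < D \<Longrightarrow> (c \<cdot>\<^sub>m X + a \<cdot>\<^sub>m Y) $$ (x,y) = c * X $$ (x,y) + a * Y $$ (x,y)"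
      using X Y by simp
    hence "kraus J D' D K (c \<cdot>\<^sub>m X + a \<cdot>\<^sub>m Y) $$ (p,q) = (\<Sum>j\<in>J. \<Sum>x<D. \<Sum>y<D. c * (K j p x * X $$ (x,y) * cnj (K j q y)) + a * (K j p x * Y $$ (x,y) * cnj (K j q y)))"
      using pq unfolding kraus_def by (simp add: e)
    also have "\<dots> = c * kraus J D' D K X $$ (p,q) + a * kraus J D' D K Y $$ (p,q)"
      using pq unfolding kraus_def by (simp only: sum.distrib sum_distrib_left index_mat split)
    finally show ?thesis using pq by simp
  qed
qed auto

lemma sub_block_ampliate: assumes P: "P < k" and Q: "Q < k" and F: "\<And>Y. Y \<in> carrier_mat Da Da \<Longrightarrow> F Y \<in> carrier_mat Db Db"
  shows "sub_block Db P Q (ampliate k Da Db F X) = F (sub_block Da P Q X)"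
proof (rule eq_matI)
  have Fc: "F (sub_block Da P Q X) \<in> carrier_mat Db Db" by (rule F) (simp add: sub_block_def)
  fix a b assume "a < dim_row (F (sub_block Da P Q X))" "b < dim_col (F (sub_block Da P Q X))"
  hence ab: "a < Db" "b < Db" using Fc by auto
  have "P * Db + a < k * Db" "Q * Db + b < k * Db" using P Q ab mul_bound by auto
  thus "sub_block Db P Q (ampliate k Da Db F X) $$ (a,b) = F (sub_block Da P Q X) $$ (a,b)"
    using ab unfolding sub_block_def ampliate_def by simp
next
  have Fc: "F (sub_block Da P Q X) \<in> carrier_mat Db Db" by (rule F) (simp add: sub_block_def)
  show "dim_row (sub_block Db P Q (ampliate k Da Db F X)) = dim_row (F (sub_block Da P Q X))"
    "dim_col (sub_block Db P Q (ampliate k Da Db F X)) = dim_col (F (sub_block Da P Q X))"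
    using Fc by (auto simp: sub_block_def)
qed

lemma ampliate_comp: assumes F: "\<And>Y. Y \<in> carrier_mat Da Da \<Longrightarrow> F Y \<in> carrier_mat Db Db"
  shows "ampliate k Db Dc G (ampliate k Da Db F X) = ampliate k Da Dc (\<lambda>Y. G (F Y)) X"
proof (rule eq_matI)
  fix p q assume "p < dim_row (ampliate k Da Dc (\<lambda>Y. G (F Y)) X)" "q < dim_col (ampliate k Da Dc (\<lambda>Y. G (F Y)) X)"
  hence pq: "p < k * Dc" "q < k * Dc" by (auto simp: ampliate_def)
  hence "0 < Dc" by (cases Dc) auto
  hence "p div Dc < k" "q div Dc < k" using pq by (auto simp: less_mult_imp_div_less)
  thus "ampliate k Db Dc G (ampliate k Da Db F X) $$ (p,q) = ampliate k Da Dc (\<lambda>Y. G (F Y)) X $$ (p,q)"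
    using pq unfolding ampliate_def[of k Db Dc G] ampliate_def[of k Da Dc]
    by (simp add: sub_block_ampliate[OF _ _ F])
qed (auto simp: ampliate_def)

lemma ampliate_cong: assumes "\<And>Y. Y \<in> carrier_mat D D \<Longrightarrow> F Y = G Y"
  shows "ampliate k D D' F X = ampliate k D D' G X"
  unfolding ampliate_def using assms by (simp add: sub_block_def)

lemma mtrace_one: "mtrace (1\<^sub>m n) = of_nat n"
  unfolding mtrace_def by simp

lemma unitary_square: assumes "unitary_mat m n U" shows "m = n"
proof -
  have U: "U \<in> carrier_mat m n" "mat_adjoint U * U = 1\<^sub>m n" "U * mat_adjoint U = 1\<^sub>m m"
    using assms unfolding unitary_mat_def by auto
  have "mtrace (U * mat_adjoint U) = mtrace (mat_adjoint U * U)"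
    using U by (intro mtrace_comm[of _ m n]) auto
  hence "(of_nat m :: complex) = of_nat n" using U by (simp add: mtrace_one)
  thus ?thesis by simp
qed

lemma mtrace_minus: "A \<in> carrier_mat n n \<Longrightarrow> B \<in> carrier_mat n n \<Longrightarrow> mtrace (A - B) = mtrace A - mtrace B"
  unfolding mtrace_def by (simp add: sum_subtractf)

lemma PTE_minus: assumes "A \<in> carrier_mat (sum_list (dPs ds)) (sum_list (dPs ds))" "B \<in> carrier_mat (sum_list (dPs ds)) (sum_list (dPs ds))"
  and i: "i < length ds" "a < fst (ds!i)" "a' < fst (ds!i)"
  shows "PTE ds (A - B) i a a' = PTE ds A i a a' - PTE ds B i a a'"
proof -
  have "\<And>b. b < snd (ds!i) \<Longrightarrow> off (dPs ds) i + (a * snd (ds!i) + b) < sum_list (dPs ds) \<and> off (dPs ds) i + (a' * snd (ds!i) + b) < sum_list (dPs ds)"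
    using off_bound[of i "dPs ds"] mul_bound i by auto
  thus ?thesis using assms unfolding PTE_def by (simp add: sum_subtractf)
qed

lemma mult_carrier_sq[simp]: "A \<in> carrier_mat n n \<Longrightarrow> B \<in> carrier_mat n n \<Longrightarrow> A * B \<in> carrier_mat n n"
  by simp

lemma minus_carrier_sq[simp]: "A \<in> carrier_mat n n \<Longrightarrow> B \<in> carrier_mat n n \<Longrightarrow> A - B \<in> carrier_mat n n"
  unfolding carrier_mat_def by auto

lemma ampliate_carrier[simp]: "ampliate k D D' F X \<in> carrier_mat (k*D') (k*D')"
  unfolding ampliate_def by simp

lemma bicomm: "B \<subseteq> carrier_mat n n \<Longrightarrow> Bo \<in> B \<Longrightarrow> Bo \<in> commutant n (commutant n B)"
  unfolding commutant_def by auto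

lemma conj_mtrace: assumes V: "V \<in> carrier_mat n n" "mat_adjoint V * V = 1\<^sub>m n" and Z: "Z \<in> carrier_mat n n"
  shows "mtrace (V * Z * mat_adjoint V) = mtrace Z"
proof -
  have "mtrace (V * Z * mat_adjoint V) = mtrace (V * (Z * mat_adjoint V))"
    using V Z by (simp add: assoc_mult_mat[of _ n n _ n _ n])
  also have "\<dots> = mtrace ((Z * mat_adjoint V) * V)" using V Z by (intro mtrace_comm[of _ n n]) auto
  also have "(Z * mat_adjoint V) * V = Z" using V Z by (simp add: assoc_mult_mat[of _ n n _ n _ n])
  finally show ?thesis .
qed

lemma heis_comm: assumes U: "U \<in> carrier_mat n n" "mat_adjoint U * U = 1\<^sub>m n" "U * mat_adjoint U = 1\<^sub>m n"
  and A: "A \<subseteq> carrier_mat n n" and B: "B \<subseteq> carrier_mat n n"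
  and H: "\<forall>Bo\<in>B. \<forall>Ao\<in>A. (mat_adjoint U * Bo * U) * Ao = Ao * (mat_adjoint U * Bo * U)"
  and D: "D \<in> commutant n (commutant n B)"
  shows "mat_adjoint U * D * U \<in> commutant n A"
proof -
  note assoc = assoc_mult_mat[of _ n n _ n _ n]
  have c1: "\<And>Z. Z \<in> carrier_mat n n \<Longrightarrow> U * (mat_adjoint U * Z) = Z"
    using U by (simp add: assoc[symmetric])
  have c2: "\<And>Z. Z \<in> carrier_mat n n \<Longrightarrow> mat_adjoint U * (U * Z) = Z"
    using U by (simp add: assoc[symmetric])
  have Dc: "D \<in> carrier_mat n n" using D unfolding commutant_def by auto
  have "mat_adjoint U * D * U * Ao = Ao * (mat_adjoint U * D * U)" if Ao: "Ao \<in> A" for Ao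
  proof -
    have Aoc: "Ao \<in> carrier_mat n n" using A Ao by auto
    define C where "C = U * Ao * mat_adjoint U"
    have Cc: "C \<in> carrier_mat n n" unfolding C_def using U Aoc by auto
    have "C \<in> commutant n B"
    proof -
      have "C * Bo = Bo * C" if Bo: "Bo \<in> B" for Bo
      proof -
        have Boc: "Bo \<in> carrier_mat n n" using B Bo by auto
        have "C * Bo = U * (Ao * (mat_adjoint U * Bo * U)) * mat_adjoint U"
          unfolding C_def using U Aoc Boc by (simp add: assoc)
        also have "\<dots> = U * ((mat_adjoint U * Bo * U) * Ao) * mat_adjoint U"
          using H Bo Ao by simp
        also have "\<dots> = Bo * C"
          unfolding C_def using U Aoc Boc by (simp add: assoc c1)
        finally show ?thesis .
      qed
      thus ?thesis unfolding commutant_def using Cc by auto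
    qed
    hence DC: "D * C = C * D" using D unfolding commutant_def by auto
    have "mat_adjoint U * D * U * Ao = mat_adjoint U * (D * C) * U"
      unfolding C_def using U Aoc Dc by (simp add: assoc)
    also have "\<dots> = mat_adjoint U * (C * D) * U" unfolding DC ..
    also have "\<dots> = Ao * (mat_adjoint U * D * U)"
      unfolding C_def using U Aoc Dc by (simp add: assoc c2)
    finally show ?thesis .
  qed
  thus ?thesis unfolding commutant_def using U Dc by auto
qed

section \<open>Schroedinger implies Heisenberg\<close>

lemma comm_trace: assumes A: "A \<in> carrier_mat n n" and B: "B \<in> carrier_mat n n" and R: "R \<in> carrier_mat n n"
  shows "mtrace (A * (B * R - R * B)) = mtrace ((A * B - B * A) * R)"
proof -
  have "A * (B * R - R * B) = A * (B * R) - A * (R * B)" by (rule mult_minus_distrib_mat) (use A B R in auto)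
  hence "mtrace (A * (B * R - R * B)) = mtrace (A * (B * R)) - mtrace (A * (R * B))"
    using A B R by (simp add: mtrace_minus[of _ n])
  also have "A * (R * B) = (A * R) * B" using assoc_mult_mat[of A n n R n B n] A B R by auto
  also have "mtrace ((A * R) * B) = mtrace (B * (A * R))"
    using A B R by (intro mtrace_comm[of _ n n]) auto
  also have "B * (A * R) = (B * A) * R" using assoc_mult_mat[of B n n A n R n] A B R by auto
  also have "A * (B * R) = (A * B) * R" using assoc_mult_mat[of A n n B n R n] A B R by auto
  also have "mtrace ((A * B) * R) - mtrace ((B * A) * R) = mtrace ((A * B) * R - (B * A) * R)"
    using A B R by (simp add: mtrace_minus[of _ n])
  also have "(A * B) * R - (B * A) * R = (A * B - B * A) * R"
    by (rule minus_mult_distrib_mat[symmetric]) (use A B R in auto)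
  finally show ?thesis .
qed

lemma S_to_H:
  assumes A: "A \<subseteq> carrier_mat n n" and B: "B \<subseteq> carrier_mat n n"
    and U: "U \<in> carrier_mat n n" "mat_adjoint U * U = 1\<^sub>m n" "U * mat_adjoint U = 1\<^sub>m n"
    and decA: "vN_decomposition n A VA dsA" and decB: "vN_decomposition n (commutant n B) VB dsB"
    and S: "schroedinger_semicausal n (\<lambda>\<rho>. U * \<rho> * mat_adjoint U) VA dsA VB dsB"
  shows "heisenberg_semicausal U A B"
proof -
  note assoc = assoc_mult_mat[of _ n n _ n _ n]
  have mmd: "\<And>A B C. A \<in> carrier_mat n n \<Longrightarrow> B \<in> carrier_mat n n \<Longrightarrow> C \<in> carrier_mat n n \<Longrightarrow> A * (B - C) = A * B - A * (C :: complex mat)"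
    by (rule mult_minus_distrib_mat) auto
  have mdm: "\<And>A B C. A \<in> carrier_mat n n \<Longrightarrow> B \<in> carrier_mat n n \<Longrightarrow> C \<in> carrier_mat n n \<Longrightarrow> (A - B) * C = A * C - B * (C :: complex mat)"
    by (rule minus_mult_distrib_mat) auto
  have mtm: "\<And>A B. A \<in> carrier_mat n n \<Longrightarrow> B \<in> carrier_mat n n \<Longrightarrow> mtrace (A - B) = mtrace A - mtrace B"
    by (rule mtrace_minus)
  obtain E' where cp: "cptp_map (dLs dsA) (dLs dsB) E'"
    and eq: "\<And>\<rho>. \<rho> \<in> carrier_mat n n \<Longrightarrow> partial_trace_vN VB dsB (U * \<rho> * mat_adjoint U) = E' (partial_trace_vN VA dsA \<rho>)"
    using S unfolding schroedinger_semicausal_def by blast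
  let ?sA = "sum_list (dLs dsA)" and ?sB = "sum_list (dLs dsB)"
  have lin: "\<And>X Y c a. X \<in> block_alg (dLs dsA) \<Longrightarrow> Y \<in> block_alg (dLs dsA) \<Longrightarrow> E' (c \<cdot>\<^sub>m X + a \<cdot>\<^sub>m Y) = c \<cdot>\<^sub>m E' X + a \<cdot>\<^sub>m E' Y"
    and clos: "\<And>X. X \<in> block_alg (dLs dsA) \<Longrightarrow> E' X \<in> block_alg (dLs dsB)"
    using cp unfolding cptp_map_def by auto
  have E0: "E' (0\<^sub>m ?sA ?sA) = 0\<^sub>m ?sB ?sB"
  proof -
    have z: "0\<^sub>m ?sA ?sA \<in> block_alg (dLs dsA)" by (rule block_alg_zero)
    have "(0::complex) \<cdot>\<^sub>m 0\<^sub>m ?sA ?sA + (0::complex) \<cdot>\<^sub>m 0\<^sub>m ?sA ?sA = 0\<^sub>m ?sA ?sA"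
      by (rule eq_matI) auto
    hence "E' (0\<^sub>m ?sA ?sA) = 0 \<cdot>\<^sub>m E' (0\<^sub>m ?sA ?sA) + 0 \<cdot>\<^sub>m E' (0\<^sub>m ?sA ?sA)"
      using lin[OF z z, of 0 0] by simp
    moreover have "E' (0\<^sub>m ?sA ?sA) \<in> carrier_mat ?sB ?sB"
      using block_alg_carrier[OF clos[OF z]] .
    moreover have "\<And>Z. Z \<in> carrier_mat ?sB ?sB \<Longrightarrow> (0::complex) \<cdot>\<^sub>m Z + (0::complex) \<cdot>\<^sub>m Z = 0\<^sub>m ?sB ?sB"
      by (rule eq_matI) auto
    ultimately show ?thesis by metis
  qed
  have Bdec: "\<And>Bo. Bo \<in> B \<Longrightarrow> Bo \<in> commutant n (commutant n B)" using bicomm[OF B] .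
  show ?thesis unfolding heisenberg_semicausal_def
  proof (intro ballI)
    fix Bo Ao assume Bo: "Bo \<in> B" and Ao: "Ao \<in> A"
    have Boc: "Bo \<in> carrier_mat n n" using B Bo by auto
    have Aoc: "Ao \<in> carrier_mat n n" using A Ao by auto
    define Hh where "Hh = mat_adjoint U * Bo * U"
    define Mc where "Mc = Hh * Ao - Ao * Hh"
    define \<rho> where "\<rho> = mat_adjoint Mc"
    define X where "X = Ao * \<rho> - \<rho> * Ao"
    have Hc: "Hh \<in> carrier_mat n n" unfolding Hh_def using U Boc by simp
    have Mcc: "Mc \<in> carrier_mat n n" unfolding Mc_def using Hc Aoc by simp
    have \<rho>c: "\<rho> \<in> carrier_mat n n" unfolding \<rho>_def using Mcc by simp
    have Xc: "X \<in> carrier_mat n n" unfolding X_def using \<rho>c Aoc by simp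
    have tr1: "mtrace (D * X) = 0" if D: "D \<in> commutant n A" for D
    proof -
      have Dc: "D \<in> carrier_mat n n" using D unfolding commutant_def by auto
      have DA: "D * Ao = Ao * D" using D Ao unfolding commutant_def by auto
      have "mtrace (D * X) = mtrace ((D * Ao - Ao * D) * \<rho>)" unfolding X_def by (rule comm_trace[OF Dc Aoc \<rho>c])
      also have "D * Ao - Ao * D = 0\<^sub>m n n" unfolding DA by (rule eq_matI) (use Aoc Dc in auto)
      also have "0\<^sub>m n n * \<rho> = 0\<^sub>m n n" using \<rho>c by simp
      finally show ?thesis by (simp add: mtrace_def)
    qed
    have pteA: "\<And>i a a'. i < length dsA \<Longrightarrow> a < fst (dsA!i) \<Longrightarrow> a' < fst (dsA!i) \<Longrightarrow> PTE dsA (VA * X * mat_adjoint VA) i a a' = 0"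
      using PTE_zero[OF decA Xc tr1] by blast
    have ptA0: "partial_trace_vN VA dsA X = 0\<^sub>m ?sA ?sA" by (rule PT_zero) (rule pteA)
    have ptB0: "partial_trace_vN VB dsB (U * X * mat_adjoint U) = 0\<^sub>m ?sB ?sB"
      using eq[OF Xc] ptA0 E0 by simp
    have trB: "mtrace (Bo * (U * X * mat_adjoint U)) = 0"
      by (rule PTE_zero_trace[OF decB Bdec[OF Bo]]) (use U Xc PT_zero_PTE[OF ptB0] in auto)
    have "mtrace (Hh * X) = mtrace (mat_adjoint U * (Bo * U * X))"
      unfolding Hh_def using U Boc Xc by (simp add: assoc)
    also have "\<dots> = mtrace ((Bo * U * X) * mat_adjoint U)"
      using U Boc Xc by (intro mtrace_comm[of _ n n]) auto
    also have "\<dots> = mtrace (Bo * (U * X * mat_adjoint U))"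
      using U Boc Xc by (simp add: assoc)
    finally have t0: "mtrace (Hh * X) = 0" using trB by simp
    have "mtrace (Hh * X) = mtrace (Mc * \<rho>)"
      unfolding X_def Mc_def by (rule comm_trace[OF Hc Aoc \<rho>c])
    hence "mtrace (Mc * mat_adjoint Mc) = 0" using t0 unfolding \<rho>_def by simp
    hence "Mc = 0\<^sub>m n n" using mtrace_adj_zero[OF Mcc] by simp
    hence z: "\<And>i j. i < n \<Longrightarrow> j < n \<Longrightarrow> (Hh * Ao) $$ (i,j) - (Ao * Hh) $$ (i,j) = 0"
      unfolding Mc_def using Hc Aoc by (metis index_minus_mat(1) index_zero_mat(1) carrier_matD mult_carrier_mat)
    have "Hh * Ao = Ao * Hh"
      by (rule eq_matI) (use z Hc Aoc in auto)
    thus "mat_adjoint U * Bo * U * Ao = Ao * (mat_adjoint U * Bo * U)" unfolding Hh_def .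
  qed
qed

section \<open>Heisenberg implies Schroedinger\<close>

lemma conj_mtrace2: assumes V: "V \<in> carrier_mat n n" "V * mat_adjoint V = 1\<^sub>m n" and Z: "Z \<in> carrier_mat n n"
  shows "mtrace (mat_adjoint V * Z * V) = mtrace Z"
proof -
  have "mtrace (mat_adjoint V * Z * V) = mtrace (V * (mat_adjoint V * Z))"
    using V Z by (intro mtrace_comm[of _ n n]) auto
  also have "V * (mat_adjoint V * Z) = Z" using V Z by (simp add: assoc_mult_mat[of _ n n _ n _ n, symmetric])
  finally show ?thesis .
qed

lemma H_to_S:
  assumes A: "A \<subseteq> carrier_mat n n" and B: "B \<subseteq> carrier_mat n n"
    and U: "U \<in> carrier_mat n n" "mat_adjoint U * U = 1\<^sub>m n" "U * mat_adjoint U = 1\<^sub>m n"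
    and decA: "vN_decomposition n A VA dsA" and decB: "vN_decomposition n (commutant n B) VB dsB"
    and H: "heisenberg_semicausal U A B"
  shows "schroedinger_semicausal n (\<lambda>\<rho>. U * \<rho> * mat_adjoint U) VA dsA VB dsB"
proof -
  note assoc = assoc_mult_mat[of _ n n _ n _ n]
  have mmd: "\<And>A B C. A \<in> carrier_mat n n \<Longrightarrow> B \<in> carrier_mat n n \<Longrightarrow> C \<in> carrier_mat n n \<Longrightarrow> A * (B - C) = A * B - A * (C :: complex mat)"
    by (rule mult_minus_distrib_mat) auto
  have mdm: "\<And>A B C. A \<in> carrier_mat n n \<Longrightarrow> B \<in> carrier_mat n n \<Longrightarrow> C \<in> carrier_mat n n \<Longrightarrow> (A - B) * C = A * C - B * (C :: complex mat)"
    by (rule minus_mult_distrib_mat) auto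
  note BA = vN_dec_basic[OF decA] and BB = vN_dec_basic[OF decB]
  have HH: "\<forall>Bo\<in>B. \<forall>Ao\<in>A. (mat_adjoint U * Bo * U) * Ao = Ao * (mat_adjoint U * Bo * U)"
    using H unfolding heisenberg_semicausal_def by auto
  let ?sA = "sum_list (dLs dsA)" and ?sB = "sum_list (dLs dsB)"
  define G where "G = VB * U * mat_adjoint VA"
  have Gc: "G \<in> carrier_mat n n" unfolding G_def using U BA BB by simp
  have GA: "mat_adjoint G = VA * mat_adjoint U * mat_adjoint VB"
    unfolding G_def using U BA BB by (simp add: adj_mult[of _ n n _ n] assoc)
  define kr1 where "kr1 = kraus (Jset dsA) n ?sA (K1 dsA)"
  define kr2 where "kr2 = kraus (UNIV::unit set) n n (\<lambda>_ p a. G $$ (p,a))"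
  define kr3 where "kr3 = kraus (Jset dsB) ?sB n (K3 dsB)"
  define E' where "E' = (\<lambda>Y. kr3 (kr2 (kr1 Y)))"
  have E'eq: "E' Y = partial_trace_vN VB dsB (U * (mat_adjoint VA * Lift dsA Y * VA) * mat_adjoint U)"
    if Y: "Y \<in> carrier_mat ?sA ?sA" for Y
  proof -
    define L where "L = Lift dsA Y"
    have Lc: "L \<in> carrier_mat n n" unfolding L_def using Lift_carrier[of dsA Y] BA by simp
    have 1: "kr1 Y = L" unfolding kr1_def L_def using Lift_kraus[OF Y] BA by simp
    have 2: "kr2 L = G * L * mat_adjoint G" unfolding kr2_def using conj_kraus[OF Gc Lc] by simp
    define Xp where "Xp = U * (mat_adjoint VA * L * VA) * mat_adjoint U"
    have Xpc: "Xp \<in> carrier_mat n n" unfolding Xp_def using U BA Lc by simp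
    have 3: "VB * Xp * mat_adjoint VB = G * L * mat_adjoint G"
      unfolding GA Xp_def unfolding G_def using U BA BB Lc by (simp add: assoc)
    have PTk: "partial_trace_vN VB dsB Xp = kr3 (VB * Xp * mat_adjoint VB)"
      unfolding kr3_def using PT_kraus[of VB Xp dsB] BB Xpc by simp
    have "E' Y = kr3 (kr2 (kr1 Y))" by (simp add: E'_def)
    also have "\<dots> = kr3 (G * L * mat_adjoint G)" using 1 2 by simp
    also have "\<dots> = kr3 (VB * Xp * mat_adjoint VB)" using 3 by simp
    also have "\<dots> = partial_trace_vN VB dsB Xp" using PTk by simp
    finally show ?thesis unfolding Xp_def L_def .
  qed
  have cp: "cptp_map (dLs dsA) (dLs dsB) E'"
    unfolding cptp_map_def
  proof (intro conjI ballI allI impI)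
    fix X assume X: "X \<in> block_alg (dLs dsA)"
    show "E' X \<in> block_alg (dLs dsB)" using E'eq[OF block_alg_carrier[OF X]] PT_block_alg by simp
  next
    fix X Y c a assume X: "X \<in> block_alg (dLs dsA)" and Y: "Y \<in> block_alg (dLs dsA)"
    have Xc: "X \<in> carrier_mat ?sA ?sA" and Yc: "Y \<in> carrier_mat ?sA ?sA" using block_alg_carrier X Y by auto
    show "E' (c \<cdot>\<^sub>m X + a \<cdot>\<^sub>m Y) = c \<cdot>\<^sub>m E' X + a \<cdot>\<^sub>m E' Y"
      unfolding E'_def kr1_def kr2_def kr3_def using Xc Yc by (simp add: kraus_linear)
  next
    fix X assume X: "X \<in> block_alg (dLs dsA)"
    have Xc: "X \<in> carrier_mat ?sA ?sA" using block_alg_carrier X by auto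
    define L where "L = Lift dsA X"
    have Lc: "L \<in> carrier_mat n n" unfolding L_def using Lift_carrier[of dsA X] BA by simp
    define Xp where "Xp = U * (mat_adjoint VA * L * VA) * mat_adjoint U"
    have Xpc: "Xp \<in> carrier_mat n n" unfolding Xp_def using U BA Lc by simp
    have "mtrace (E' X) = mtrace (partial_trace_vN VB dsB Xp)" unfolding Xp_def L_def E'eq[OF Xc] ..
    also have "\<dots> = mtrace (VB * Xp * mat_adjoint VB)" by (rule mtrace_PT) (use BB Xpc in simp)
    also have "\<dots> = mtrace Xp" by (rule conj_mtrace) (use BB Xpc in auto)
    also have "\<dots> = mtrace (mat_adjoint VA * L * VA)" unfolding Xp_def by (rule conj_mtrace) (use U BA Lc in auto)
    also have "\<dots> = mtrace L" by (rule conj_mtrace2) (use BA Lc in auto)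
    also have "\<dots> = mtrace X" unfolding L_def by (rule mtrace_Lift) (use BA Xc in auto)
    finally show "mtrace (E' X) = mtrace X" .
  next
    fix k X assume Xc: "X \<in> carrier_mat (k * ?sA) (k * ?sA)" and ps: "psd X"
    have e: "ampliate k ?sA ?sB E' X = ampliate k n ?sB kr3 (ampliate k n n kr2 (ampliate k ?sA n kr1 X))"
      unfolding E'_def kr1_def kr2_def
      by (subst ampliate_comp[where Da=n and Db=n], simp, subst ampliate_comp[where Da="?sA" and Db=n], simp_all)
    have p1: "psd (ampliate k ?sA n kr1 X)" unfolding kr1_def by (rule cp_kraus[OF _ Xc ps]) simp
    have p2: "psd (ampliate k n n kr2 (ampliate k ?sA n kr1 X))" unfolding kr2_def
      by (rule cp_kraus[OF _ _ p1]) simp_all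
    show "psd (ampliate k ?sA ?sB E' X)" unfolding e kr3_def
      by (rule cp_kraus[OF _ _ p2]) simp_all
  qed
  have cA: "\<And>Z. Z \<in> carrier_mat n n \<Longrightarrow> VA * (mat_adjoint VA * Z) = Z"
    using BA by (simp add: assoc[symmetric])
  have posA: "\<And>i. i < length dsA \<Longrightarrow> 0 < snd (dsA!i)" using BA(5) by auto
  have eq: "partial_trace_vN VB dsB (U * \<rho> * mat_adjoint U) = E' (partial_trace_vN VA dsA \<rho>)"
    if \<rho>c: "\<rho> \<in> carrier_mat n n" for \<rho>
  proof -
    define T where "T = partial_trace_vN VA dsA \<rho>"
    have Tc: "T \<in> carrier_mat ?sA ?sA" unfolding T_def by (rule PT_carrier)
    define L where "L = Lift dsA T"
    have Lc: "L \<in> carrier_mat n n" unfolding L_def using Lift_carrier[of dsA T] BA by simp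
    define W where "W = mat_adjoint VA * L * VA"
    have Wc: "W \<in> carrier_mat n n" unfolding W_def using BA Lc by simp
    define Z where "Z = \<rho> - W"
    have Zc: "Z \<in> carrier_mat n n" unfolding Z_def using \<rho>c Wc by simp
    have E'T: "E' T = partial_trace_vN VB dsB (U * W * mat_adjoint U)"
      unfolding W_def L_def using E'eq[OF Tc] .
    have VAW: "VA * W * mat_adjoint VA = L" unfolding W_def using BA Lc by (simp add: assoc cA)
    have VAZ: "VA * Z * mat_adjoint VA = VA * \<rho> * mat_adjoint VA - L"
      unfolding Z_def using BA \<rho>c Wc by (simp add: mmd mdm VAW)
    have zA: "PTE dsA (VA * Z * mat_adjoint VA) i a a' = 0"
      if i: "i < length dsA" "a < fst (dsA!i)" "a' < fst (dsA!i)" for i a a'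
    proof -
      have "PTE dsA (VA * Z * mat_adjoint VA) i a a' = PTE dsA (VA * \<rho> * mat_adjoint VA) i a a' - PTE dsA L i a a'"
        unfolding VAZ by (rule PTE_minus) (use BA \<rho>c Lc i in auto)
      also have "PTE dsA L i a a' = T $$ (off (dLs dsA) i + a, off (dLs dsA) i + a')"
        unfolding L_def by (rule PTE_Lift) (use i posA in auto)
      also have "\<dots> = PTE dsA (VA * \<rho> * mat_adjoint VA) i a a'"
        unfolding T_def using D2[of i dsA a i a'] i by simp
      finally show ?thesis by simp
    qed
    have trc: "mtrace (D * (U * Z * mat_adjoint U)) = 0" if D: "D \<in> commutant n (commutant n B)" for D
    proof -
      have Dc: "D \<in> carrier_mat n n" using D unfolding commutant_def by auto
      have D': "mat_adjoint U * D * U \<in> commutant n A" by (rule heis_comm[OF U A B HH D])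
      have "mtrace (D * (U * Z * mat_adjoint U)) = mtrace ((D * U * Z) * mat_adjoint U)"
        using Dc U Zc by (simp add: assoc)
      also have "\<dots> = mtrace (mat_adjoint U * (D * U * Z))"
        using Dc U Zc by (intro mtrace_comm[of _ n n]) auto
      also have "\<dots> = mtrace ((mat_adjoint U * D * U) * Z)"
        using Dc U Zc by (simp add: assoc)
      also have "\<dots> = 0" by (rule PTE_zero_trace[OF decA D' Zc zA])
      finally show ?thesis .
    qed
    have UZc: "U * Z * mat_adjoint U \<in> carrier_mat n n" using U Zc by simp
    have zB: "PTE dsB (VB * (U * Z * mat_adjoint U) * mat_adjoint VB) i a a' = 0"
      if i: "i < length dsB" "a < fst (dsB!i)" "a' < fst (dsB!i)" for i a a'
      by (rule PTE_zero[OF decB UZc trc i])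
    have diff: "VB * (U * Z * mat_adjoint U) * mat_adjoint VB =
        VB * (U * \<rho> * mat_adjoint U) * mat_adjoint VB - VB * (U * W * mat_adjoint U) * mat_adjoint VB"
      unfolding Z_def using BB U \<rho>c Wc by (simp add: mmd mdm)
    have "partial_trace_vN VB dsB (U * \<rho> * mat_adjoint U) = partial_trace_vN VB dsB (U * W * mat_adjoint U)"
    proof (rule PT_eq)
      fix i a a' assume i: "i < length dsB" "a < fst (dsB!i)" "a' < fst (dsB!i)"
      have "PTE dsB (VB * (U * \<rho> * mat_adjoint U) * mat_adjoint VB) i a a' - PTE dsB (VB * (U * W * mat_adjoint U) * mat_adjoint VB) i a a'
         = PTE dsB (VB * (U * Z * mat_adjoint U) * mat_adjoint VB) i a a'"
        unfolding diff by (rule PTE_minus[symmetric]) (use BB U \<rho>c Wc i in auto)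
      thus "PTE dsB (VB * (U * \<rho> * mat_adjoint U) * mat_adjoint VB) i a a' = PTE dsB (VB * (U * W * mat_adjoint U) * mat_adjoint VB) i a a'"
        using zB[OF i] by simp
    qed
    thus ?thesis using E'T unfolding T_def by simp
  qed
  show ?thesis unfolding schroedinger_semicausal_def using cp eq by blast
qed


theorem mainTheorem4:
  fixes n m :: nat and U :: "complex mat" and A B :: "complex mat set"
    and VA VB :: "complex mat" and dsA dsB :: "(nat \<times> nat) list"
  assumes "vN_algebra n A" and "vN_algebra m B"
    and "unitary_mat m n U"
    and "vN_decomposition n A VA dsA"
    and "vN_decomposition m (commutant m B) VB dsB"
  shows "heisenberg_semicausal U A B \<longleftrightarrow>
         schroedinger_semicausal n (\<lambda>\<rho>. U * \<rho> * mat_adjoint U) VA dsA VB dsB"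
proof -
  have mn: "m = n" by (rule unitary_square[OF assms(3)])
  have U: "U \<in> carrier_mat n n" "mat_adjoint U * U = 1\<^sub>m n" "U * mat_adjoint U = 1\<^sub>m n"
    using assms(3) mn unfolding unitary_mat_def by auto
  have A: "A \<subseteq> carrier_mat n n" using assms(1) unfolding vN_algebra_def by auto
  have B: "B \<subseteq> carrier_mat n n" using assms(2) mn unfolding vN_algebra_def by auto
  have decB: "vN_decomposition n (commutant n B) VB dsB" using assms(5) mn by simp
  show ?thesis
    using S_to_H[OF A B U assms(4) decB] H_to_S[OF A B U assms(4) decB] by blast
qed

end
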